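(* Let $\mathbb{F}$ be a finite field of characteristic $2$ with at least $4$ elements, and let $n\geq 1$. Then every matrix $A\in M_n(\mathbb{F})$ can be written as $A=N+D$ with $N,D\in M_n(\mathbb{F})$, $N^2=0$, and $D$ diagonalizable.
   Context: A matrix $D\in M_n(\mathbb{F})$ is diagonalizable if there exists an invertible $U\in M_n(\mathbb{F})$ such that $U^{-1}DU$ is diagonal. *)

theory Defs
  imports "HOL-Analysis.Analysis"
begin

text \<open>A square matrix is diagonal if all off-diagonal entries vanish.\<close>
definition is_diagonal_matrix :: "'a::zero ^'n^'n \<Rightarrow> bool" where
  "is_diagonal_matrix A \<longleftrightarrow> (\<forall>i j. i \<noteq> j \<longrightarrow> A $ i $ j = 0)"

text \<open>D is diagonalizable if U^{-1} D U is diagonal for some invertible U.\<close>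
definition diagonalizable :: "'a::field ^'n^'n \<Rightarrow> bool" where
  "diagonalizable D \<longleftrightarrow>
     (\<exists>U::'a^'n^'n. invertible U \<and> is_diagonal_matrix (matrix_inv U ** D ** U))"

end

theory Submission
  imports Defs "HOL-Computational_Algebra.Polynomial"
begin

definition lin :: "('a::field^'n \<Rightarrow> 'a^'n) \<Rightarrow> bool" where
  "lin f \<longleftrightarrow> (\<forall>x y. f (x + y) = f x + f y) \<and> (\<forall>c x. f (c *s x) = c *s f x)"

lemma lin_iff_linear: "lin f \<longleftrightarrow> Vector_Spaces.linear (*s) (*s) f"
  unfolding lin_def Vector_Spaces.linear_iff using vec.vector_space_axioms by auto

lemma lin_add: "lin f \<Longrightarrow> f (x + y) = f x + f y" by (simp add: lin_def)
lemma lin_scale: "lin f \<Longrightarrow> f (c *s x) = c *s f x" by (simp add: lin_def)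
lemma lin_0: "lin f \<Longrightarrow> f 0 = 0"
  using lin_scale[of f 0 0] by simp
lemma lin_neg: "lin f \<Longrightarrow> f (- x) = - f x"
  using lin_scale[of f "-1" x] by (simp add: vector_smult_lneg)
lemma lin_diff: "lin f \<Longrightarrow> f (x - y) = f x - f y"
  using lin_add[of f x "-y"] lin_neg[of f y] by simp
lemma lin_sum: "lin f \<Longrightarrow> f (sum g S) = sum (\<lambda>i. f (g i)) S"
  by (induction S rule: infinite_finite_induct) (auto simp: lin_0 lin_add)

lemma lin_mat: "lin ((*v) A)"
  by (simp add: lin_iff_linear)

lemma lin_pow: "lin f \<Longrightarrow> lin (f ^^ n)"
  by (induction n) (auto simp: lin_def)

definition pe :: "('a::field^'n \<Rightarrow> 'a^'n) \<Rightarrow> 'a poly \<Rightarrow> 'a^'n \<Rightarrow> 'a^'n" where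
  "pe f p x = (\<Sum>i\<le>degree p. coeff p i *s (f ^^ i) x)"

lemma pe_range:
  assumes "degree p < N"
  shows "pe f p x = (\<Sum>i<N. coeff p i *s (f ^^ i) x)"
proof -
  have "(\<Sum>i<N. coeff p i *s (f ^^ i) x) = (\<Sum>i\<le>degree p. coeff p i *s (f ^^ i) x)"
    using assms by (intro sum.mono_neutral_right) (auto simp: coeff_eq_0)
  then show ?thesis by (simp add: pe_def)
qed

lemma pe_add: "pe f (p + q) x = pe f p x + pe f q x"
proof -
  define N where "N = Suc (max (degree p) (degree q))"
  have "degree (p + q) < N" "degree p < N" "degree q < N"
    using degree_add_le_max[of p q] by (auto simp: N_def)
  then show ?thesis
    by (simp add: pe_range[of _ N] sum.distrib vector_add_ldistrib algebra_simps)
qed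

lemma pe_smult: "pe f (smult c p) x = c *s pe f p x"
proof -
  define N where "N = Suc (degree p)"
  have "degree (smult c p) < N" "degree p < N"
    using degree_smult_le[of c p] by (auto simp: N_def)
  then show ?thesis
    by (simp add: pe_range[of _ N] vec.scale_sum_right vector_smult_assoc)
qed

lemma pe_0[simp]: "pe f 0 x = 0" by (simp add: pe_def)

lemma pe_const: "pe f [:c:] x = c *s x" by (simp add: pe_def)
lemma pe_1: "pe f 1 x = x" by (simp add: pe_def)

lemma pe_minus: "pe f (- p) x = - pe f p x"
  using pe_smult[of f "-1" p x] by (simp add: vector_smult_lneg)

lemma pe_diff: "pe f (p - q) x = pe f p x - pe f q x"
  using pe_add[of f p "-q" x] pe_minus[of f q x] by simp

lemma pe_lin: assumes "lin f" shows "lin (pe f p)"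
  using assms unfolding lin_def pe_def
  by (auto simp: lin_add[OF lin_pow[OF assms]] lin_scale[OF lin_pow[OF assms]]
       sum.distrib vector_add_ldistrib vec.scale_sum_right vector_smult_assoc mult.commute)

lemma pe_sum: "pe f (sum g S) x = (\<Sum>i\<in>S. pe f (g i) x)"
  by (induction S rule: infinite_finite_induct) (auto simp: pe_add)

lemma pe_pCons0:
  assumes "lin f"
  shows "pe f (pCons 0 p) x = f (pe f p x)"
proof -
  define N where "N = Suc (degree p)"
  have d1: "degree (pCons 0 p) < Suc N" "degree p < N"
    by (auto simp: N_def degree_pCons_le intro: le_less_trans[OF degree_pCons_le])
  have "pe f (pCons 0 p) x = (\<Sum>i<Suc N. coeff (pCons 0 p) i *s (f ^^ i) x)"
    by (rule pe_range[OF d1(1)])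
  also have "\<dots> = (\<Sum>i<N. coeff (pCons 0 p) (Suc i) *s (f ^^ (Suc i)) x)"
    unfolding sum.lessThan_Suc_shift by simp
  also have "\<dots> = (\<Sum>i<N. f (coeff p i *s (f ^^ i) x))"
    by (simp add: lin_scale[OF assms])
  also have "\<dots> = f (pe f p x)"
    by (simp add: pe_range[OF d1(2)] lin_sum[OF assms])
  finally show ?thesis .
qed

lemma pe_pCons:
  assumes "lin f"
  shows "pe f (pCons a p) x = a *s x + f (pe f p x)"
proof -
  have "pCons a p = [:a:] + pCons 0 p" by simp
  then show ?thesis by (metis pe_add pe_const pe_pCons0[OF assms])
qed

lemma pe_mult:
  assumes "lin f"
  shows "pe f (p * q) x = pe f p (pe f q x)"
proof (induction p)
  case 0
  then show ?case using pe_lin[OF assms] by (simp add: lin_0)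
next
  case (pCons a p)
  have "pe f (pCons a p * q) x = pe f (smult a q + pCons 0 (p * q)) x"
    by simp
  also have "\<dots> = a *s pe f q x + f (pe f p (pe f q x))"
    by (simp add: pe_add pe_smult pe_pCons0[OF assms] pCons.IH)
  also have "\<dots> = pe f (pCons a p) (pe f q x)"
    by (simp add: pe_pCons[OF assms])
  finally show ?case .
qed

lemma pe_X: "lin f \<Longrightarrow> pe f [:0,1:] x = f x"
  by (simp add: pe_pCons lin_0)

lemma pe_lin_factor: "lin f \<Longrightarrow> pe f [:-a,1:] x = f x - a *s x"
  by (simp add: pe_pCons lin_0 vector_smult_lneg)

lemma pe_comm:
  assumes "lin f" shows "pe f p (pe f q x) = pe f q (pe f p x)"
  by (metis assms mult.commute pe_mult)

lemma pe_f_comm: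
  assumes "lin f" shows "f (pe f p x) = pe f p (f x)"
  using pe_comm[OF assms, of "[:0,1:]" p x] by (simp add: pe_X[OF assms])

lemma pe_monom: "pe f (monom 1 i) x = (f ^^ i) x"
  by (simp add: pe_def coeff_monom degree_monom_eq if_distrib[where f="\<lambda>c. c *s _"] cong: if_cong)



definition lfun :: "('a::field^'n \<Rightarrow> 'a) \<Rightarrow> bool" where
  "lfun f \<longleftrightarrow> (\<forall>x y. f (x + y) = f x + f y) \<and> (\<forall>c x. f (c *s x) = c * f x)"

lemma lfun_add: "lfun f \<Longrightarrow> f (x + y) = f x + f y" by (simp add: lfun_def)
lemma lfun_scale: "lfun f \<Longrightarrow> f (c *s x) = c * f x" by (simp add: lfun_def)
lemma lfun_0: "lfun f \<Longrightarrow> f 0 = 0"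
  using lfun_scale[of f 0 0] by simp
lemma lfun_diff: "lfun f \<Longrightarrow> f (x - y) = f x - f y"
  using lfun_add[of f "x - y" y] by simp
lemma lfun_sum: "lfun f \<Longrightarrow> f (sum g S) = sum (\<lambda>i. f (g i)) S"
  by (induction S rule: infinite_finite_induct) (auto simp: lfun_0 lfun_add)

lemma dual_basis:
  fixes \<psi> :: "nat \<Rightarrow> 'a::field^'n \<Rightarrow> 'a"
  assumes W: "vec.subspace W" and lf: "\<And>i. lfun (\<psi> i)"
    and ind: "\<And>c. (\<forall>x\<in>W. (\<Sum>i<k. c i * \<psi> i x) = 0) \<Longrightarrow> (\<forall>i<k. c i = 0)"
  shows "\<exists>x\<in>W. \<forall>i<k. \<psi> i x = t i"
  using ind
proof (induction k arbitrary: t)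
  case 0
  then show ?case using W vec.subspace_0 by blast
next
  case (Suc k)
  have indk: "\<forall>i<k. c i = 0" if "\<forall>x\<in>W. (\<Sum>i<k. c i * \<psi> i x) = 0" for c
  proof -
    have "\<forall>x\<in>W. (\<Sum>i<Suc k. (c(k:=0)) i * \<psi> i x) = 0"
      using that by simp
    then have h: "\<forall>i<Suc k. (c(k:=0)) i = 0" by (rule Suc.prems)
    show ?thesis
    proof (intro allI impI)
      fix i assume "i < k"
      then show "c i = 0" using h[rule_format, of i] by simp
    qed
  qed
  note IH = Suc.IH[OF indk]
  have "\<forall>j. \<exists>x. j < k \<longrightarrow> x \<in> W \<and> (\<forall>i<k. \<psi> i x = (if i = j then 1 else 0))"
  proof
    fix j
    obtain x where "x \<in> W" "\<forall>i<k. \<psi> i x = (if i = j then 1 else 0)"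
      using IH[of "\<lambda>i. if i = j then 1 else 0"] by blast
    then show "\<exists>x. j < k \<longrightarrow> x \<in> W \<and> (\<forall>i<k. \<psi> i x = (if i = j then 1 else 0))" by blast
  qed
  then obtain xs where xs: "\<And>j. j < k \<Longrightarrow> xs j \<in> W"
    "\<And>i j. j < k \<Longrightarrow> i < k \<Longrightarrow> \<psi> i (xs j) = (if i = j then 1 else 0)"
    by metis
  have "\<exists>y\<in>W. (\<forall>i<k. \<psi> i y = 0) \<and> \<psi> k y = 1"
  proof (rule ccontr)
    assume nex: "\<not> ?thesis"
    have zero: "\<psi> k y = 0" if "y \<in> W" "\<forall>i<k. \<psi> i y = 0" for y
    proof (rule ccontr)
      assume ne: "\<psi> k y \<noteq> 0"
      let ?y = "inverse (\<psi> k y) *s y"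
      have "?y \<in> W" using that W vec.subspace_scale by blast
      moreover have "\<forall>i<k. \<psi> i ?y = 0" using that lfun_scale[OF lf] by simp
      moreover have "\<psi> k ?y = 1" using ne lfun_scale[OF lf] by simp
      ultimately show False using nex by blast
    qed
    define c where "c i = (if i < k then \<psi> k (xs i) else -1)" for i
    have "\<forall>x\<in>W. (\<Sum>i<Suc k. c i * \<psi> i x) = 0"
    proof
      fix x assume x: "x \<in> W"
      define y where "y = x - (\<Sum>j<k. \<psi> j x *s xs j)"
      have yW: "y \<in> W" unfolding y_def
        using x xs(1) W by (intro vec.subspace_diff vec.subspace_sum vec.subspace_scale) auto
      have "\<psi> i y = 0" if "i < k" for i
      proof -
        have "\<psi> i y = \<psi> i x - (\<Sum>j<k. \<psi> j x * \<psi> i (xs j))"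
          unfolding y_def by (simp add: lfun_diff[OF lf] lfun_sum[OF lf] lfun_scale[OF lf])
        also have "(\<Sum>j<k. \<psi> j x * \<psi> i (xs j)) = (\<Sum>j<k. if j = i then \<psi> j x else 0)"
          using xs(2) that by (intro sum.cong) auto
        also have "\<dots> = \<psi> i x" using that by simp
        finally show ?thesis by simp
      qed
      then have "\<psi> k y = 0" using zero yW by blast
      then have "\<psi> k x = (\<Sum>j<k. \<psi> j x * \<psi> k (xs j))"
        unfolding y_def by (simp add: lfun_diff[OF lf] lfun_sum[OF lf] lfun_scale[OF lf])
      then show "(\<Sum>i<Suc k. c i * \<psi> i x) = 0"
        by (simp add: c_def mult.commute)
    qed
    then have "\<forall>i<Suc k. c i = 0" by (rule Suc.prems)
    then have "c k = 0" by simp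
    then show False by (simp add: c_def)
  qed
  then obtain y where y: "y \<in> W" "\<And>i. i < k \<Longrightarrow> \<psi> i y = 0" "\<psi> k y = 1" by blast
  obtain x where x: "x \<in> W" "\<And>i. i < k \<Longrightarrow> \<psi> i x = t i" using IH[of t] by blast
  define x' where "x' = x + (t k - \<psi> k x) *s y"
  have "x' \<in> W" unfolding x'_def using x y W by (intro vec.subspace_add vec.subspace_scale) auto
  moreover have "\<psi> i x' = t i" if "i < Suc k" for i
    using that x y unfolding x'_def lfun_add[OF lf] lfun_scale[OF lf]
    by (cases "i = k") auto
  ultimately show ?case by blast
qed

definition lf :: "'a::field^'n \<Rightarrow> 'a^'n \<Rightarrow> 'a" where
  "lf \<phi> x = (\<Sum>i\<in>UNIV. \<phi> $ i * x $ i)"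

lemma lfun_lf: "lfun (lf \<phi>)"
  unfolding lfun_def lf_def by (auto simp: sum.distrib algebra_simps sum_distrib_left)

lemma lfun_lf2: "lfun (\<lambda>\<phi>. lf \<phi> u)"
  unfolding lfun_def lf_def by (auto simp: sum.distrib algebra_simps sum_distrib_left)

lemma lf_axis: "lf (axis j 1) v = v $ j"
proof -
  have "lf (axis j 1) v = (\<Sum>i\<in>UNIV. if i = j then v $ i else 0)"
    unfolding lf_def by (intro sum.cong) (auto simp: axis_def)
  then show ?thesis by simp
qed

lemma functional_exists:
  fixes u :: "nat \<Rightarrow> 'a::field^'n"
  assumes ind: "\<And>c. (\<Sum>i<k. c i *s u i) = 0 \<Longrightarrow> \<forall>i<k. c i = 0"
  shows "\<exists>\<phi>. \<forall>i<k. lf \<phi> (u i) = t i"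
proof -
  have "\<exists>\<phi>\<in>UNIV. \<forall>i<k. (\<lambda>\<phi>. lf \<phi> (u i)) \<phi> = t i"
  proof (rule dual_basis[where \<psi> = "\<lambda>i \<phi>. lf \<phi> (u i)"])
    show "vec.subspace UNIV" by simp
    show "lfun (\<lambda>\<phi>. lf \<phi> (u i))" for i by (rule lfun_lf2)
    fix c assume h: "\<forall>x\<in>UNIV. (\<Sum>i<k. c i * lf x (u i)) = 0"
    have "(\<Sum>i<k. c i *s u i) = 0"
    proof (subst vec_eq_iff, intro allI)
      fix j
      have "0 = (\<Sum>i<k. c i * lf (axis j 1) (u i))" using h by simp
      also have "\<dots> = (\<Sum>i<k. c i *s u i) $ j" by (simp add: lf_axis sum_component)
      finally show "(\<Sum>i<k. c i *s u i) $ j = 0 $ j" by simp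
    qed
    then show "\<forall>i<k. c i = 0" by (rule ind)
  qed
  then show ?thesis by simp
qed



definition Ap :: "'a::field^'n^'n \<Rightarrow> nat \<Rightarrow> 'a^'n \<Rightarrow> 'a^'n" where
  "Ap A i = ((*v) A ^^ i)"

definition inv_sub :: "'a::field^'n^'n \<Rightarrow> ('a^'n) set \<Rightarrow> bool" where
  "inv_sub A W \<longleftrightarrow> vec.subspace W \<and> (\<forall>x\<in>W. A *v x \<in> W)"

definition rel :: "'a::field^'n^'n \<Rightarrow> ('a^'n) set \<Rightarrow> 'a^'n \<Rightarrow> nat \<Rightarrow> bool" where
  "rel A W \<phi> m \<longleftrightarrow> (\<exists>c. \<forall>x\<in>W. lf \<phi> (Ap A m x) = (\<Sum>i<m. c i * lf \<phi> (Ap A i x)))"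

lemma Ap_0[simp]: "Ap A 0 x = x" by (simp add: Ap_def)
lemma Ap_Suc: "Ap A (Suc i) x = A *v Ap A i x" by (simp add: Ap_def)
lemma Ap_add: "Ap A i (Ap A j x) = Ap A (i + j) x"
  by (simp add: Ap_def funpow_add)
lemma lin_Ap: "lin (Ap A i)"
  unfolding Ap_def by (rule lin_pow[OF lin_mat])
lemma Ap_Suc': "Ap A (Suc i) x = Ap A i (A *v x)"
  using Ap_add[of A i 1 x] by (simp add: Ap_def)

lemma Ap_in: "inv_sub A W \<Longrightarrow> x \<in> W \<Longrightarrow> Ap A i x \<in> W"
  by (induction i) (auto simp: Ap_Suc inv_sub_def)

lemma lfun_lfAp: "lfun (\<lambda>x. lf \<phi> (Ap A i x))"
  using lfun_lf[of \<phi>] lin_Ap[of A i] by (simp add: lfun_def lin_def)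

lemma lf_Ap_sum: "lf \<phi> (Ap A i (\<Sum>j<K. c j *s Ap A j w)) = (\<Sum>j<K. c j * lf \<phi> (Ap A (i + j) w))"
  by (simp add: lin_sum[OF lin_Ap] lin_scale[OF lin_Ap] lfun_sum[OF lfun_lf] lfun_scale[OF lfun_lf] Ap_add)

lemma rel_exists:
  fixes A :: "'a::{field,finite}^'n^'n"
  shows "\<exists>m. rel A W \<phi> m"
proof -
  let ?g = "\<lambda>i::nat. ((*v) A ^^ i)"
  have "\<not> inj ?g"
  proof
    assume "inj ?g"
    moreover have "finite (range ?g)" by (rule finite_subset[OF subset_UNIV]) simp
    ultimately have "finite (UNIV :: nat set)" using finite_imageD by blast
    then show False by simp
  qed
  then obtain i j where ij: "i \<noteq> j" "?g i = ?g j" unfolding inj_def by blast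
  then obtain i j where ij: "i < j" "?g i = ?g j"
    by (metis linorder_neqE_nat)
  have "rel A W \<phi> j"
    unfolding rel_def
  proof (intro exI ballI)
    fix x
    have "(\<Sum>l<j. (if l = i then 1 else 0) * lf \<phi> (Ap A l x)) = lf \<phi> (Ap A i x)"
    proof -
      have "(\<Sum>l<j. (if l = i then 1 else 0) * lf \<phi> (Ap A l x)) = (\<Sum>l<j. if l = i then lf \<phi> (Ap A l x) else 0)"
        by (intro sum.cong) auto
      then show ?thesis using ij(1) by simp
    qed
    also have "\<dots> = lf \<phi> (Ap A j x)" using ij(2) by (simp add: Ap_def)
    finally show "lf \<phi> (Ap A j x) = (\<Sum>l<j. (if l = i then 1 else 0) * lf \<phi> (Ap A l x))" by simp
  qed
  then show ?thesis by blast
qed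

lemma hankel_inj:
  assumes H: "\<forall>m<K. lf \<phi> (Ap A m w) = (if m = K - 1 then 1 else 0)"
    and z: "\<forall>i<K. lf \<phi> (Ap A i (\<Sum>j<K. c j *s Ap A j w)) = 0"
  shows "\<forall>j<K. c j = 0"
proof (rule ccontr)
  assume nz: "\<not> (\<forall>j<K. c j = 0)"
  define S where "S = {j. j < K \<and> c j \<noteq> 0}"
  have S: "finite S" "S \<noteq> {}" using nz by (auto simp: S_def)
  define m where "m = Max S"
  have m: "m < K" "c m \<noteq> 0" using Max_in[OF S] by (auto simp: m_def S_def)
  have mx: "c j = 0" if "j < K" "m < j" for j
  proof (rule ccontr)
    assume "c j \<noteq> 0"
    then have "j \<in> S" using that by (simp add: S_def)
    then have "j \<le> m" using Max_ge[OF S(1)] by (simp add: m_def)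
    then show False using that by simp
  qed
  define i where "i = K - 1 - m"
  have "lf \<phi> (Ap A i (\<Sum>j<K. c j *s Ap A j w)) = (\<Sum>j<K. c j * lf \<phi> (Ap A (i + j) w))"
    by (rule lf_Ap_sum)
  also have "\<dots> = (\<Sum>j<K. if j = m then c m else 0)"
  proof (intro sum.cong refl)
    fix j assume j: "j \<in> {..<K}"
    show "c j * lf \<phi> (Ap A (i + j) w) = (if j = m then c m else 0)"
    proof (cases "j < m")
      case True
      then have "i + j < K" "i + j \<noteq> K - 1" using m j by (auto simp: i_def)
      then show ?thesis using H True by auto
    next
      case False
      show ?thesis
      proof (cases "j = m")
        case True
        then have "i + j = K - 1" "i + j < K" using m by (auto simp: i_def)
        then show ?thesis using H True by auto
      next
        case False
        then show ?thesis using mx[of j] j \<open>\<not> j < m\<close> by auto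
      qed
    qed
  qed
  also have "\<dots> = c m" using m by simp
  finally show False using z m by (auto simp: i_def)
qed

lemma sum_update_coeff:
  fixes c :: "nat \<Rightarrow> 'a::field" and u :: "nat \<Rightarrow> 'a^'n"
  assumes "l < K"
  shows "(\<Sum>j<K. c j *s u j) + d *s u l = (\<Sum>j<K. (c(l := c l + d)) j *s u j)"
proof -
  have "(\<Sum>j<K. (c(l := c l + d)) j *s u j) = (\<Sum>j<K. c j *s u j + (if j = l then d *s u j else 0))"
  proof (intro sum.cong refl)
    fix j
    show "(c(l := c l + d)) j *s u j = c j *s u j + (if j = l then d *s u j else 0)"
      by (cases "j = l") (simp_all add: vector_sadd_rdistrib)
  qed
  also have "\<dots> = (\<Sum>j<K. c j *s u j) + d *s u l"
    using assms by (simp add: sum.distrib sum.delta)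
  finally show ?thesis by simp
qed

lemma hankel_solve:
  assumes H: "\<forall>m<K. lf \<phi> (Ap A m w) = (if m = K - 1 then 1 else 0)"
  shows "m \<le> K \<Longrightarrow> \<exists>c. \<forall>i<m. lf \<phi> (Ap A i (\<Sum>j<K. c j *s Ap A j w)) = lf \<phi> (Ap A i x)"
proof (induction m)
  case 0
  then show ?case by simp
next
  case (Suc m)
  then obtain c where c: "\<forall>i<m. lf \<phi> (Ap A i (\<Sum>j<K. c j *s Ap A j w)) = lf \<phi> (Ap A i x)"
    by auto
  define z where "z = (\<Sum>j<K. c j *s Ap A j w)"
  define d where "d = lf \<phi> (Ap A m x) - lf \<phi> (Ap A m z)"
  define l where "l = K - 1 - m"
  have l: "l < K" using Suc by (auto simp: l_def)
  define c' where "c' = c(l := c l + d)"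
  have z': "(\<Sum>j<K. c' j *s Ap A j w) = z + d *s Ap A l w"
    unfolding c'_def z_def using sum_update_coeff[OF l, of c "\<lambda>j. Ap A j w" d] by simp
  have key: "lf \<phi> (Ap A i (Ap A l w)) = (if i = m then 1 else 0)" if "i \<le> m" for i
  proof -
    have "i + l < K" "(i + l = K - 1) = (i = m)" using that Suc by (auto simp: l_def)
    then show ?thesis using H by (simp add: Ap_add)
  qed
  have "\<forall>i<Suc m. lf \<phi> (Ap A i (\<Sum>j<K. c' j *s Ap A j w)) = lf \<phi> (Ap A i x)"
  proof (intro allI impI)
    fix i assume i: "i < Suc m"
    have "lf \<phi> (Ap A i (\<Sum>j<K. c' j *s Ap A j w)) = lf \<phi> (Ap A i z) + d * lf \<phi> (Ap A i (Ap A l w))"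
      unfolding z' by (simp add: lin_add[OF lin_Ap] lin_scale[OF lin_Ap] lfun_add[OF lfun_lf] lfun_scale[OF lfun_lf])
    also have "\<dots> = lf \<phi> (Ap A i x)"
      using key[of i] i c by (cases "i = m") (auto simp: d_def z_def)
    finally show "lf \<phi> (Ap A i (\<Sum>j<K. c' j *s Ap A j w)) = lf \<phi> (Ap A i x)" .
  qed
  then show ?case by blast
qed



lemma hankel_no_rel:
  assumes W: "inv_sub A W" and w: "w \<in> W"
    and H: "\<forall>m<k. lf \<phi> (Ap A m w) = (if m = k - 1 then 1 else 0)"
    and m: "m < k"
  shows "\<not> rel A W \<phi> m"
proof
  assume "rel A W \<phi> m"
  then obtain c where c: "\<forall>x\<in>W. lf \<phi> (Ap A m x) = (\<Sum>i<m. c i * lf \<phi> (Ap A i x))"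
    unfolding rel_def by blast
  define x where "x = Ap A (k - 1 - m) w"
  have xW: "x \<in> W" unfolding x_def using Ap_in[OF W w] .
  have "lf \<phi> (Ap A m x) = 1"
    using H m by (simp add: x_def Ap_add)
  moreover have "(\<Sum>i<m. c i * lf \<phi> (Ap A i x)) = 0"
  proof (intro sum.neutral ballI)
    fix i assume "i \<in> {..<m}"
    then have "i + (k - 1 - m) < k" "i + (k - 1 - m) \<noteq> k - 1" using m by auto
    then show "c i * lf \<phi> (Ap A i x) = 0" using H by (simp add: x_def Ap_add)
  qed
  ultimately show False using c xW by simp
qed

definition krylov_indep :: "'a::field^'n^'n \<Rightarrow> 'a^'n \<Rightarrow> nat \<Rightarrow> bool" where
  "krylov_indep A w k \<longleftrightarrow> (\<forall>c. (\<Sum>j<k. c j *s Ap A j w) = 0 \<longrightarrow> (\<forall>j<k. c j = 0))"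

lemma split_lemma:
  fixes A :: "'a::{field,finite}^'n^'n"
  assumes W: "inv_sub A W" and ne: "\<exists>z\<in>W. z \<noteq> 0"
  shows "\<exists>w K W'. w \<in> W \<and> 1 \<le> K \<and> krylov_indep A w K
     \<and> (\<exists>c. Ap A K w = (\<Sum>j<K. c j *s Ap A j w))
     \<and> inv_sub A W' \<and> W' \<subseteq> W \<and> w \<notin> W'
     \<and> (\<forall>c. (\<Sum>j<K. c j *s Ap A j w) \<in> W' \<longrightarrow> (\<Sum>j<K. c j *s Ap A j w) = 0)
     \<and> (\<forall>x\<in>W. \<exists>c y. y \<in> W' \<and> x = (\<Sum>j<K. c j *s Ap A j w) + y)"
proof -
  have Wsub: "vec.subspace W" using W by (simp add: inv_sub_def)
  define ds where "ds \<phi> = (LEAST m. rel A W \<phi> m)" for \<phi>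
  have rel_ds: "rel A W \<phi> (ds \<phi>)" for \<phi>
    unfolding ds_def using rel_exists[of A W \<phi>] by (rule LeastI_ex)
  have min_ds: "\<not> rel A W \<phi> m" if "m < ds \<phi>" for \<phi> m
    using that unfolding ds_def by (rule not_less_Least)
  define K where "K = Max (range ds)"
  have finr: "finite (range ds)" by (rule finite_imageI) simp
  have Kge: "ds \<phi> \<le> K" for \<phi> unfolding K_def using finr by (intro Max_ge) auto
  obtain \<phi>0 where phi0: "ds \<phi>0 = K"
  proof -
    have "K \<in> range ds" unfolding K_def using finr by (intro Max_in) auto
    then show ?thesis using that by blast
  qed
  \<comment> \<open>any independent Krylov family has length at most K\<close>
  have bound: "k \<le> K" if wW: "w \<in> W" and ind: "krylov_indep A w k" for w k
  proof -
    obtain \<phi> where H: "\<forall>m<k. lf \<phi> (Ap A m w) = (if m = k - 1 then 1 else 0)"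
      using functional_exists[where k=k and u="\<lambda>j. Ap A j w" and t="\<lambda>m. if m = k - 1 then 1 else 0"] ind
      unfolding krylov_indep_def by blast
    have "\<not> ds \<phi> < k"
    proof
      assume "ds \<phi> < k"
      then have "\<not> rel A W \<phi> (ds \<phi>)" using hankel_no_rel[OF W wW H] by blast
      then show False using rel_ds by blast
    qed
    then show ?thesis using Kge[of \<phi>] by simp
  qed
  \<comment> \<open>K is at least one\<close>
  obtain z where z: "z \<in> W" "z \<noteq> 0" using ne by blast
  have "krylov_indep A z 1" unfolding krylov_indep_def using z by simp
  then have K1: "1 \<le> K" using bound[OF z(1)] by blast
  \<comment> \<open>the functionals are independent on W\<close>
  have indf: "\<forall>i<K. c i = 0" if h: "\<forall>x\<in>W. (\<Sum>i<K. c i * lf \<phi>0 (Ap A i x)) = 0" for c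
  proof (rule ccontr)
    assume nz: "\<not> (\<forall>i<K. c i = 0)"
    define S where "S = {j. j < K \<and> c j \<noteq> 0}"
    have S: "finite S" "S \<noteq> {}" using nz by (auto simp: S_def)
    define m where "m = Max S"
    have m: "m < K" "c m \<noteq> 0" using Max_in[OF S] by (auto simp: m_def S_def)
    have mx: "c j = 0" if "j < K" "m < j" for j
    proof (rule ccontr)
      assume "c j \<noteq> 0"
      then have "j \<in> S" using that by (simp add: S_def)
      then have "j \<le> m" using Max_ge[OF S(1)] by (simp add: m_def)
      then show False using that by simp
    qed
    have "rel A W \<phi>0 m"
      unfolding rel_def
    proof (intro exI ballI)
      fix x assume x: "x \<in> W"
      have "(\<Sum>i<K. c i * lf \<phi>0 (Ap A i x)) = (\<Sum>i<Suc m. c i * lf \<phi>0 (Ap A i x))"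
        using m mx by (intro sum.mono_neutral_right) auto
      also have "\<dots> = (\<Sum>i<m. c i * lf \<phi>0 (Ap A i x)) + c m * lf \<phi>0 (Ap A m x)" by simp
      finally have "(\<Sum>i<m. c i * lf \<phi>0 (Ap A i x)) + c m * lf \<phi>0 (Ap A m x) = 0"
        using h x by simp
      then have "lf \<phi>0 (Ap A m x) = - (\<Sum>i<m. c i * lf \<phi>0 (Ap A i x)) / c m"
        using m(2) by (simp add: field_simps add_eq_0_iff)
      also have "\<dots> = (\<Sum>i<m. (- c i / c m) * lf \<phi>0 (Ap A i x))"
        by (simp add: sum_divide_distrib sum_negf)
      finally show "lf \<phi>0 (Ap A m x) = (\<Sum>i<m. (- c i / c m) * lf \<phi>0 (Ap A i x))" .
    qed
    then show False using min_ds[of m \<phi>0] m phi0 by simp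
  qed
  obtain w where wW: "w \<in> W" and H: "\<forall>i<K. lf \<phi>0 (Ap A i w) = (if i = K - 1 then 1 else 0)"
    using dual_basis[where \<psi>="\<lambda>i x. lf \<phi>0 (Ap A i x)" and k=K and W=W and t="\<lambda>i. if i = K - 1 then 1 else 0",
        OF Wsub lfun_lfAp indf] by blast
  have indK: "krylov_indep A w K"
    unfolding krylov_indep_def
  proof (rule allI, rule impI)
    fix c assume "(\<Sum>j<K. c j *s Ap A j w) = 0"
    then have "\<forall>i<K. lf \<phi>0 (Ap A i (\<Sum>j<K. c j *s Ap A j w)) = 0"
      by (simp add: lin_0[OF lin_Ap] lfun_0[OF lfun_lf])
    then show "\<forall>j<K. c j = 0" using hankel_inj[OF H] by blast
  qed
  have span: "\<exists>c. Ap A K w = (\<Sum>j<K. c j *s Ap A j w)"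
  proof (rule ccontr)
    assume nsp: "\<not> ?thesis"
    have "krylov_indep A w (Suc K)"
      unfolding krylov_indep_def
    proof (rule allI, rule impI)
      fix c assume c: "(\<Sum>j<Suc K. c j *s Ap A j w) = 0"
      have cK: "c K = 0"
      proof (rule ccontr)
        assume "c K \<noteq> 0"
        have "(\<Sum>j<K. c j *s Ap A j w) + c K *s Ap A K w = 0" using c by simp
        then have "Ap A K w = (- inverse (c K)) *s (\<Sum>j<K. c j *s Ap A j w)"
          using \<open>c K \<noteq> 0\<close>
          by (metis (no_types, lifting) add.commute add_eq_0_iff vector_smult_assoc vector_smult_lid
              vector_smult_lneg vector_smult_rneg left_inverse)
        also have "\<dots> = (\<Sum>j<K. (- inverse (c K) * c j) *s Ap A j w)"
          by (simp add: vec.scale_sum_right vector_smult_assoc)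
        finally have "\<exists>c. Ap A K w = (\<Sum>j<K. c j *s Ap A j w)"
          by (intro exI[where x="\<lambda>j. - inverse (c K) * c j"])
        then show False using nsp by blast
      qed
      then have "(\<Sum>j<K. c j *s Ap A j w) = 0" using c by simp
      then have "\<forall>j<K. c j = 0" using indK unfolding krylov_indep_def by blast
      then show "\<forall>j<Suc K. c j = 0" using cK by (simp add: less_Suc_eq)
    qed
    then have "Suc K \<le> K" using bound[OF wW] by blast
    then show False by simp
  qed
  obtain cr where cr: "\<forall>x\<in>W. lf \<phi>0 (Ap A K x) = (\<Sum>i<K. cr i * lf \<phi>0 (Ap A i x))"
    using rel_ds[of \<phi>0] phi0 unfolding rel_def by auto
  define W' where "W' = {x \<in> W. \<forall>i<K. lf \<phi>0 (Ap A i x) = 0}"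
  have subW': "vec.subspace W'"
    unfolding vec.subspace_def W'_def
    using Wsub
    by (auto simp: vec.subspace_def lin_0[OF lin_Ap] lin_add[OF lin_Ap] lin_scale[OF lin_Ap]
        lfun_0[OF lfun_lf] lfun_add[OF lfun_lf] lfun_scale[OF lfun_lf])
  have invW': "A *v x \<in> W'" if x: "x \<in> W'" for x
  proof -
    have xW: "x \<in> W" and x0: "\<forall>i<K. lf \<phi>0 (Ap A i x) = 0" using x by (auto simp: W'_def)
    have "A *v x \<in> W" using W xW by (simp add: inv_sub_def)
    moreover have "lf \<phi>0 (Ap A i (A *v x)) = 0" if i: "i < K" for i
    proof (cases "Suc i < K")
      case True
      then show ?thesis using x0 by (simp flip: Ap_Suc')
    next
      case False
      then have "Suc i = K" using i by simp
      then have "lf \<phi>0 (Ap A i (A *v x)) = lf \<phi>0 (Ap A K x)" by (simp flip: Ap_Suc')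
      also have "\<dots> = 0" using cr xW x0 by simp
      finally show ?thesis .
    qed
    ultimately show ?thesis by (simp add: W'_def)
  qed
  have invsW': "inv_sub A W'" using subW' invW' by (simp add: inv_sub_def)
  have wW': "w \<notin> W'" using H K1 by (auto simp: W'_def)
  have inter: "(\<Sum>j<K. c j *s Ap A j w) = 0" if "(\<Sum>j<K. c j *s Ap A j w) \<in> W'" for c
  proof -
    have "\<forall>i<K. lf \<phi>0 (Ap A i (\<Sum>j<K. c j *s Ap A j w)) = 0" using that by (simp add: W'_def)
    then have "\<forall>j<K. c j = 0" using hankel_inj[OF H] by blast
    then show ?thesis by simp
  qed
  have decomp: "\<exists>c y. y \<in> W' \<and> x = (\<Sum>j<K. c j *s Ap A j w) + y" if x: "x \<in> W" for x
  proof -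
    obtain c where c: "\<forall>i<K. lf \<phi>0 (Ap A i (\<Sum>j<K. c j *s Ap A j w)) = lf \<phi>0 (Ap A i x)"
      using hankel_solve[OF H, of K x] by blast
    define z where "z = (\<Sum>j<K. c j *s Ap A j w)"
    have zW: "z \<in> W" unfolding z_def
      using Wsub Ap_in[OF W wW] by (intro vec.subspace_sum vec.subspace_scale) auto
    have "x - z \<in> W'"
      using c x zW Wsub
      by (auto simp: W'_def z_def lin_diff[OF lin_Ap] lfun_diff[OF lfun_lf] vec.subspace_diff)
    then show ?thesis by (intro exI[of _ c] exI[of _ "x - z"]) (simp add: z_def)
  qed
  have "W' \<subseteq> W" by (auto simp: W'_def)
  then show ?thesis
    using wW K1 indK span invsW' wW' inter decomp by blast
qed



definition Pc :: "(nat \<Rightarrow> 'a::field) \<Rightarrow> nat \<Rightarrow> 'a poly" where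
  "Pc a j = (\<Prod>l<j. [:- a l, 1:])"

lemma Pc_0[simp]: "Pc a 0 = 1" by (simp add: Pc_def)

lemma Pc_Suc: "Pc a (Suc j) = [:- a j, 1:] * Pc a j"
  by (simp add: Pc_def mult.commute)

lemma lin_factor_mult: "[:- b, 1:] * q = smult (- b) q + pCons 0 (q :: 'a::field poly)"
  by (simp add: mult_pCons_left)

lemma coeff_lin_factor_mult:
  "coeff ([:- b, 1:] * (q :: 'a::field poly)) i = - b * coeff q i + (case i of 0 \<Rightarrow> 0 | Suc i' \<Rightarrow> coeff q i')"
  unfolding lin_factor_mult by (cases i) auto

lemma Pc_coeff_top: "coeff (Pc a j) j = 1"
  and Pc_coeff_high: "i > j \<Longrightarrow> coeff (Pc a j) i = 0"
proof -
  have "coeff (Pc a j) j = 1 \<and> (\<forall>i>j. coeff (Pc a j) i = 0)"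
  proof (induction j)
    case 0
    then show ?case by (auto simp: coeff_1)
  next
    case (Suc j)
    show ?case
    proof (intro conjI allI impI)
      show "coeff (Pc a (Suc j)) (Suc j) = 1"
        using Suc by (simp add: Pc_Suc coeff_lin_factor_mult)
      fix i assume "Suc j < i"
      then show "coeff (Pc a (Suc j)) i = 0"
        using Suc by (cases i) (auto simp: Pc_Suc coeff_lin_factor_mult)
    qed
  qed
  then show "coeff (Pc a j) j = 1" "i > j \<Longrightarrow> coeff (Pc a j) i = 0" by auto
qed

lemma Pc_coeff_sub: "coeff (Pc a (Suc j)) j = - (\<Sum>l<Suc j. a l)"
proof (induction j)
  case 0
  then show ?case by (simp add: Pc_Suc coeff_lin_factor_mult)
next
  case (Suc j)
  have "coeff (Pc a (Suc (Suc j))) (Suc j) = - a (Suc j) * coeff (Pc a (Suc j)) (Suc j) + coeff (Pc a (Suc j)) j"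
    by (simp add: Pc_Suc[of a "Suc j"] coeff_lin_factor_mult)
  also have "\<dots> = - a (Suc j) - (\<Sum>l<Suc j. a l)" using Suc by (simp add: Pc_coeff_top)
  finally show ?case by simp
qed

lemma poly_decomp:
  assumes "\<forall>i\<ge>m. coeff r i = 0"
  shows "\<exists>\<rho>. r = (\<Sum>j<m. smult (\<rho> j) (Pc a j))"
  using assms
proof (induction m arbitrary: r)
  case 0
  then have "r = 0" by (intro poly_eqI) auto
  then show ?case by simp
next
  case (Suc m)
  define r' where "r' = r - smult (coeff r m) (Pc a m)"
  have "\<forall>i\<ge>m. coeff r' i = 0"
  proof (intro allI impI)
    fix i assume "m \<le> i"
    then show "coeff r' i = 0"
      using Suc.prems by (cases "i = m") (auto simp: r'_def Pc_coeff_top Pc_coeff_high)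
  qed
  then obtain \<rho> where \<rho>: "r' = (\<Sum>j<m. smult (\<rho> j) (Pc a j))" using Suc.IH by blast
  define \<rho>' where "\<rho>' = \<rho>(m := coeff r m)"
  have "(\<Sum>j<Suc m. smult (\<rho>' j) (Pc a j)) = (\<Sum>j<m. smult (\<rho> j) (Pc a j)) + smult (coeff r m) (Pc a m)"
    by (simp add: \<rho>'_def)
  also have "\<dots> = r" unfolding \<rho>[symmetric] r'_def by simp
  finally show ?case by metis
qed

lemma poly_decomp_unique:
  "(\<Sum>j<m. smult (\<rho> j) (Pc a j)) = 0 \<Longrightarrow> \<forall>j<m. \<rho> j = 0"
proof (induction m)
  case 0
  then show ?case by simp
next
  case (Suc m)
  have cm: "coeff (\<Sum>j<Suc m. smult (\<rho> j) (Pc a j)) m = \<rho> m"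
  proof -
    have "coeff (\<Sum>j<Suc m. smult (\<rho> j) (Pc a j)) m = (\<Sum>j<Suc m. \<rho> j * coeff (Pc a j) m)"
      by (simp add: coeff_sum)
    also have "\<dots> = (\<Sum>j<Suc m. if j = m then \<rho> m else 0)"
      by (intro sum.cong) (auto simp: Pc_coeff_top Pc_coeff_high)
    finally show ?thesis by simp
  qed
  have "\<rho> m = 0" using cm unfolding Suc.prems by simp
  then have "(\<Sum>j<m. smult (\<rho> j) (Pc a j)) = 0" using Suc.prems by simp
  then show ?case using Suc.IH \<open>\<rho> m = 0\<close> less_Suc_eq by auto
qed

lemma pe_range':
  assumes "\<forall>i\<ge>N. coeff p i = 0"
  shows "pe f p x = (\<Sum>i<N. coeff p i *s (f ^^ i) x)"
proof (cases "degree p < N")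
  case True
  then show ?thesis by (rule pe_range)
next
  case False
  then have "coeff p (degree p) = 0" using assms by simp
  then have "p = 0" by simp
  then show ?thesis by simp
qed

lemma pe_krylov:
  assumes "\<forall>i\<ge>K. coeff r i = 0"
  shows "pe ((*v) A) r w = (\<Sum>i<K. coeff r i *s Ap A i w)"
  using pe_range'[OF assms] by (simp add: Ap_def)

lemma krylov_zero:
  assumes ind: "krylov_indep A w K" and r: "\<forall>i\<ge>K. coeff r i = 0" and z: "pe ((*v) A) r w = 0"
  shows "r = 0"
proof -
  have "\<forall>j<K. coeff r j = 0"
    using ind z pe_krylov[OF r, of A w] unfolding krylov_indep_def by auto
  then show ?thesis using r by (intro poly_eqI) (metis coeff_0 not_le)
qed

lemma coeff_Pc_vanish: "j < K \<Longrightarrow> \<forall>i\<ge>K. coeff (Pc a j) i = 0"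
  by (auto simp: Pc_coeff_high)

lemma family_indep_set:
  fixes u :: "nat \<Rightarrow> 'a::field^'n"
  assumes ind: "\<And>c. (\<Sum>j<K. c j *s u j) = 0 \<Longrightarrow> \<forall>j<K. c j = 0"
  shows "inj_on u {..<K}" "vec.independent (u ` {..<K})"
proof -
  show inj: "inj_on u {..<K}"
  proof (rule inj_onI)
    fix i j assume ij: "i \<in> {..<K}" "j \<in> {..<K}" "u i = u j"
    show "i = j"
    proof (rule ccontr)
      assume "i \<noteq> j"
      define c where "c l = (if l = i then 1 else if l = j then -1 else (0::'a))" for l
      have "(\<Sum>l<K. c l *s u l) = (\<Sum>l<K. (if l = i then u i else 0) - (if l = j then u j else 0))"
        by (intro sum.cong) (auto simp: c_def \<open>i \<noteq> j\<close> vector_smult_lneg)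
      also have "\<dots> = 0" using ij by (simp add: sum_subtractf sum.delta)
      finally have "\<forall>l<K. c l = 0" by (rule ind)
      then show False using ij by (auto simp: c_def)
    qed
  qed
  show "vec.independent (u ` {..<K})"
  proof (rule vec.independent_if_scalars_zero)
    show "finite (u ` {..<K})" by simp
    fix f x assume s: "(\<Sum>x\<in>u ` {..<K}. f x *s x) = 0" and x: "x \<in> u ` {..<K}"
    have "(\<Sum>j<K. f (u j) *s u j) = 0" using s by (simp add: sum.reindex[OF inj])
    then have "\<forall>j<K. f (u j) = 0" by (rule ind)
    then show "f x = 0" using x by auto
  qed
qed



definition kp :: "'a::field set \<Rightarrow> 'a poly" where
  "kp S = (\<Prod>t\<in>S. [:- t, 1:])"

definition Nm :: "'a::field^'n^'n \<Rightarrow> ('a^'n \<Rightarrow> 'a^'n) \<Rightarrow> 'a^'n \<Rightarrow> 'a^'n" where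
  "Nm A D x = A *v x - D x"

definition Zs :: "'a::field^'n^'n \<Rightarrow> 'a^'n \<Rightarrow> nat \<Rightarrow> ('a^'n) set" where
  "Zs A w K = {\<Sum>j<K. c j *s Ap A j w | c. True}"

definition good_on :: "'a::field^'n^'n \<Rightarrow> ('a^'n) set \<Rightarrow> ('a^'n \<Rightarrow> 'a^'n) \<Rightarrow> bool" where
  "good_on A Z D \<longleftrightarrow> lin D \<and> (\<forall>x\<in>Z. D x \<in> Z) \<and> (\<forall>x\<in>Z. pe D (kp UNIV) x = 0)
     \<and> (\<forall>x\<in>Z. Nm A D (Nm A D x) = 0)"

lemma lin_diff_fun: "lin f \<Longrightarrow> lin g \<Longrightarrow> lin (\<lambda>x. f x - g x)"
  unfolding lin_def by (simp add: vector_ssub_ldistrib)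

lemma lin_Nm: "lin D \<Longrightarrow> lin (Nm A D)"
  unfolding Nm_def by (rule lin_diff_fun[OF lin_mat])

lemma lin_comp: "lin f \<Longrightarrow> lin g \<Longrightarrow> lin (\<lambda>x. f (g x))"
  by (simp add: lin_def)

lemma kp_remove:
  assumes "finite S" "\<mu> \<in> S" "lin D"
  shows "pe D (kp S) x = pe D (kp (S - {\<mu>})) (D x - \<mu> *s x)"
proof -
  have eq: "kp S = kp (S - {\<mu>}) * [:- \<mu>, 1:]"
    unfolding kp_def using assms by (simp add: prod.remove mult.commute)
  have "pe D (kp S) x = pe D (kp (S - {\<mu>})) (pe D [:- \<mu>, 1:] x)"
    unfolding eq by (rule pe_mult[OF assms(3)])
  then show ?thesis by (simp add: pe_lin_factor[OF assms(3)])
qed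

lemma kp_eigen:
  assumes "finite S" "\<mu> \<in> S" "lin D" "D x = \<mu> *s x"
  shows "pe D (kp S) x = 0"
  using kp_remove[OF assms(1-3), of x] assms(4) lin_0[OF pe_lin[OF assms(3)]] by simp

lemma lin_zero_on_span:
  assumes "lin h" "\<forall>b\<in>B. h b = 0" "x \<in> vec.span B"
  shows "h x = 0"
proof -
  have l0: "Vector_Spaces.linear (*s) (*s) (\<lambda>x::'a::field^'n. 0::'a^'n)"
    by (simp add: lin_iff_linear[symmetric] lin_def)
  show ?thesis
    using vec.linear_eq_on[OF iffD1[OF lin_iff_linear assms(1)] l0 assms(3)] assms(2) by simp
qed

lemma lin_span_image:
  assumes "lin D" "\<forall>b\<in>B. D b \<in> vec.span B" "x \<in> vec.span B"
  shows "D x \<in> vec.span B"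
proof -
  have "D x \<in> D ` vec.span B" using assms(3) by blast
  also have "\<dots> = vec.span (D ` B)"
    using vec.linear_span_image[OF iffD1[OF lin_iff_linear assms(1)]] by simp
  also have "\<dots> \<subseteq> vec.span B"
    using assms(2) by (intro vec.span_minimal) auto
  finally show ?thesis .
qed



lemma pe_monom_c: "pe f (monom c i) x = c *s (f ^^ i) x"
proof -
  have "monom c i = smult c (monom 1 i)" by (simp add: smult_monom)
  then show ?thesis by (simp add: pe_smult pe_monom)
qed

lemma block_generic:
  fixes A :: "'a::{field,finite}^'n^'n" and a :: "nat \<Rightarrow> 'a"
  assumes K1: "1 \<le> K" and ind: "krylov_indep A w K"
    and cAK: "Ap A K w = (\<Sum>j<K. c j *s Ap A j w)"
    and G1: "\<And>j. j + 2 < K \<Longrightarrow> odd (K - 1 - j) \<Longrightarrow> a j \<noteq> a (Suc j)"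
    and G2: "\<And>j. j + 1 < K \<Longrightarrow> even (K - 1 - j) \<Longrightarrow>
              a j \<noteq> c (K - 1) - (\<Sum>l<K - 1. a l) \<and> a j \<noteq> a (K - 2)"
    and G3: "2 \<le> K \<Longrightarrow> a (K - 2) \<noteq> c (K - 1) - (\<Sum>l<K - 1. a l)"
  shows "\<exists>D. good_on A (Zs A w K) D"
proof -
  define \<gamma> where "\<gamma> = c (K - 1) - (\<Sum>l<K - 1. a l)"
  define p where "p = monom 1 K - (\<Sum>i<K. monom (c i) i)"
  have coeff_p: "coeff p i = (if i = K then 1 else 0) - (if i < K then c i else 0)" for i
    by (auto simp: p_def coeff_sum coeff_monom sum.delta)
  have pe_p: "pe ((*v) A) p w = 0"
  proof -
    have "pe ((*v) A) p w = Ap A K w - (\<Sum>i<K. c i *s Ap A i w)"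
      by (simp add: p_def pe_diff pe_sum pe_monom pe_monom_c Ap_def)
    then show ?thesis using cAK by simp
  qed
  have linA: "lin ((*v) A)" by (rule lin_mat)
  define v where "v j = pe ((*v) A) (Pc a j) w" for j
  have v_Suc: "v (Suc j) = A *v v j - a j *s v j" for j
    unfolding v_def Pc_Suc pe_mult[OF linA] pe_lin_factor[OF linA] ..
  have v_sum: "(\<Sum>j<m. \<rho> j *s v j) = pe ((*v) A) (\<Sum>j<m. smult (\<rho> j) (Pc a j)) w" for \<rho> m
    by (simp add: v_def pe_sum pe_smult)
  have vind: "\<forall>j<K. \<rho> j = 0" if "(\<Sum>j<K. \<rho> j *s v j) = 0" for \<rho>
  proof -
    have "\<forall>i\<ge>K. coeff (\<Sum>j<K. smult (\<rho> j) (Pc a j)) i = 0"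
      by (auto simp: coeff_sum Pc_coeff_high)
    then have "(\<Sum>j<K. smult (\<rho> j) (Pc a j)) = 0"
      using krylov_zero[OF ind] that v_sum by metis
    then show ?thesis by (rule poly_decomp_unique)
  qed
  define B where "B = v ` {..<K}"
  have injv: "inj_on v {..<K}" and indB: "vec.independent B"
    using family_indep_set[where K=K and u=v] vind unfolding B_def by auto
  \<comment> \<open>the span of B is Zs\<close>
  have span_eq: "vec.span B = Zs A w K"
  proof
    show "vec.span B \<subseteq> Zs A w K"
    proof (rule vec.span_minimal)
      show "B \<subseteq> Zs A w K"
      proof
        fix x assume "x \<in> B"
        then obtain j where j: "j < K" "x = v j" by (auto simp: B_def)
        have "x = (\<Sum>i<K. coeff (Pc a j) i *s Ap A i w)"
          unfolding j v_def by (rule pe_krylov[OF coeff_Pc_vanish[OF j(1), of a], of A w])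
        then show "x \<in> Zs A w K"
          unfolding Zs_def mem_Collect_eq by (intro exI[of _ "\<lambda>i. coeff (Pc a j) i"]) simp
      qed
      show "vec.subspace (Zs A w K)"
        unfolding vec.subspace_def Zs_def
      proof (intro conjI ballI allI)
        show "0 \<in> {\<Sum>j<K. c j *s Ap A j w |c. True}"
          by (rule CollectI, rule exI[of _ "\<lambda>_. 0"]) simp
        fix x y assume "x \<in> {\<Sum>j<K. c j *s Ap A j w |c. True}" "y \<in> {\<Sum>j<K. c j *s Ap A j w |c. True}"
        then obtain c1 c2 where "x = (\<Sum>j<K. c1 j *s Ap A j w)" "y = (\<Sum>j<K. c2 j *s Ap A j w)" by auto
        then have "x + y = (\<Sum>j<K. (c1 j + c2 j) *s Ap A j w)"
          by (simp add: sum.distrib vector_sadd_rdistrib)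
        then show "x + y \<in> {\<Sum>j<K. c j *s Ap A j w |c. True}"
          unfolding mem_Collect_eq by (intro exI[of _ "\<lambda>j. c1 j + c2 j"]) simp
      next
        fix r x assume "x \<in> {\<Sum>j<K. c j *s Ap A j w |c. True}"
        then obtain c1 where "x = (\<Sum>j<K. c1 j *s Ap A j w)" by auto
        then have "r *s x = (\<Sum>j<K. (r * c1 j) *s Ap A j w)"
          by (simp add: vec.scale_sum_right vector_smult_assoc)
        then show "r *s x \<in> {\<Sum>j<K. c j *s Ap A j w |c. True}"
          unfolding mem_Collect_eq by (intro exI[of _ "\<lambda>j. r * c1 j"]) simp
      qed
    qed
    show "Zs A w K \<subseteq> vec.span B"
    proof
      fix x assume "x \<in> Zs A w K"
      then obtain d where d: "x = (\<Sum>j<K. d j *s Ap A j w)" by (auto simp: Zs_def)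
      define r where "r = (\<Sum>j<K. monom (d j) j)"
      have r: "\<forall>i\<ge>K. coeff r i = 0" by (auto simp: r_def coeff_sum coeff_monom)
      have "pe ((*v) A) r w = x"
        unfolding d pe_krylov[OF r] by (intro sum.cong) (auto simp: r_def coeff_sum coeff_monom sum.delta)
      moreover obtain \<rho> where "r = (\<Sum>j<K. smult (\<rho> j) (Pc a j))" using poly_decomp[OF r] by blast
      ultimately have "x = (\<Sum>j<K. \<rho> j *s v j)" using v_sum by simp
      moreover have "(\<Sum>j<K. \<rho> j *s v j) \<in> vec.span B"
      proof (rule vec.span_sum)
        fix j assume "j \<in> {..<K}"
        then show "\<rho> j *s v j \<in> vec.span B"
          unfolding B_def by (intro vec.span_scale vec.span_base) auto
      qed
      ultimately show "x \<in> vec.span B" by simp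
    qed
  qed
  \<comment> \<open>the last column\<close>
  define R where "R = pCons 0 (Pc a (K - 1)) - p"
  have R_high: "\<forall>i\<ge>K. coeff R i = 0"
  proof (intro allI impI)
    fix i assume i: "K \<le> i"
    then obtain i' where i': "i = Suc i'" using K1 by (cases i) auto
    show "coeff R i = 0"
      using i K1 by (auto simp: R_def coeff_p i' Pc_coeff_top Pc_coeff_high)
  qed
  have R_top: "coeff R (K - 1) = \<gamma>"
  proof (cases "K = 1")
    case True
    then show ?thesis by (simp add: R_def coeff_p \<gamma>_def)
  next
    case False
    then have "K - 1 = Suc (K - 2)" using K1 by simp
    then have "coeff (pCons 0 (Pc a (K - 1))) (K - 1) = coeff (Pc a (Suc (K - 2))) (K - 2)"
      by (metis coeff_pCons_Suc)
    also have "\<dots> = - (\<Sum>l<K - 1. a l)" using \<open>K - 1 = Suc (K - 2)\<close> Pc_coeff_sub by metis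
    finally show ?thesis using K1 by (simp add: R_def coeff_p \<gamma>_def)
  qed
  define R' where "R' = R - smult \<gamma> (Pc a (K - 1))"
  have R'_high: "\<forall>i\<ge>K - 1. coeff R' i = 0"
  proof (intro allI impI)
    fix i assume i: "K - 1 \<le> i"
    show "coeff R' i = 0"
    proof (cases "i = K - 1")
      case True
      then show ?thesis using R_top Pc_coeff_top[of a "K - 1"] by (simp add: R'_def)
    next
      case False
      then have "i \<ge> K" "i > K - 1" using i by auto
      then show ?thesis using R_high by (simp add: R'_def Pc_coeff_high)
    qed
  qed
  obtain \<rho> where \<rho>: "R' = (\<Sum>j<K - 1. smult (\<rho> j) (Pc a j))" using poly_decomp[OF R'_high] by blast
  have A_last: "A *v v (K - 1) = \<gamma> *s v (K - 1) + (\<Sum>j<K - 1. \<rho> j *s v j)"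
  proof -
    have "A *v v (K - 1) = pe ((*v) A) R w"
      by (simp add: R_def pe_diff pe_p v_def pe_pCons0[OF linA])
    also have "R = smult \<gamma> (Pc a (K - 1)) + R'" by (simp add: R'_def)
    also have "pe ((*v) A) \<dots> w = \<gamma> *s v (K - 1) + (\<Sum>j<K - 1. \<rho> j *s v j)"
      by (simp add: pe_add pe_smult v_def \<rho> pe_sum)
    finally show ?thesis .
  qed
  \<comment> \<open>definition of D on the basis\<close>
  define sp where "sp = (\<Sum>i<K - 1. if even (K - 1 - i) then \<rho> i *s v i else 0)"
  define fp where "fp = (\<Sum>i<K - 1. if odd (K - 1 - i) then \<rho> i *s v i else 0)"
  have sp_fp: "sp + fp = (\<Sum>j<K - 1. \<rho> j *s v j)"
    unfolding sp_def fp_def sum.distrib[symmetric] by (intro sum.cong) auto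
  define G where "G j = (if j + 1 < K then (if even (K - 1 - j) then a j *s v j else A *v v j)
                         else \<gamma> *s v j + sp)" for j
  define D where "D = vec.construct B (\<lambda>x. G (the_inv_into {..<K} v x))"
  have linD: "lin D" unfolding D_def lin_iff_linear by (rule vec.linear_construct[OF indB])
  have Dv: "D (v j) = G j" if "j < K" for j
  proof -
    have "v j \<in> B" using that by (simp add: B_def)
    then have "D (v j) = G (the_inv_into {..<K} v (v j))"
      unfolding D_def by (rule vec.construct_basis[OF indB])
    also have "the_inv_into {..<K} v (v j) = j" using that injv by (simp add: the_inv_into_f_f)
    finally show ?thesis .
  qed
  have vB: "v j \<in> vec.span B" if "j < K" for j
    using that by (auto simp: B_def intro: vec.span_base)
  have vnext: "v (Suc j) = A *v v j - a j *s v j" for j by (rule v_Suc)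
  have Av: "A *v v j = a j *s v j + v (Suc j)" for j using v_Suc[of j] by simp
  \<comment> \<open>N on the basis\<close>
  let ?N = "Nm A D"
  have linN: "lin ?N" by (rule lin_Nm[OF linD])
  have N_even: "?N (v j) = v (Suc j)" if "j + 1 < K" "even (K - 1 - j)" for j
    using that by (simp add: Nm_def Dv G_def vnext)
  have N_odd: "?N (v j) = 0" if "j + 1 < K" "odd (K - 1 - j)" for j
    using that by (simp add: Nm_def Dv G_def)
  have N_last: "?N (v (K - 1)) = fp"
  proof -
    have "?N (v (K - 1)) = A *v v (K - 1) - (\<gamma> *s v (K - 1) + sp)"
      using K1 by (simp add: Nm_def Dv G_def)
    also have "\<dots> = fp" using A_last sp_fp by (simp add: algebra_simps)
    finally show ?thesis .
  qed
  have NNv: "?N (?N (v j)) = 0" if j: "j < K" for j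
  proof (cases "j + 1 < K")
    case True
    show ?thesis
    proof (cases "even (K - 1 - j)")
      case True
      have ne1: "K - 1 - j \<noteq> 1"
      proof
        assume "K - 1 - j = 1"
        then show False using True by simp
      qed
      have j2: "j + 2 < K" using ne1 \<open>j + 1 < K\<close> by linarith
      have "Suc (K - 1 - Suc j) = K - 1 - j" using j2 by simp
      then have "odd (K - 1 - Suc j)" using True by (metis even_Suc)
      note jj = j2 this
      then show ?thesis using N_even[OF \<open>j + 1 < K\<close> True] N_odd[of "Suc j"] jj by simp
    next
      case False
      then show ?thesis using N_odd[OF \<open>j + 1 < K\<close>] lin_0[OF linN] by simp
    qed
  next
    case False
    then have "j = K - 1" using j by simp
    have "?N fp = (\<Sum>i<K - 1. if odd (K - 1 - i) then \<rho> i *s ?N (v i) else 0)"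
      unfolding fp_def lin_sum[OF linN] by (intro sum.cong) (auto simp: lin_scale[OF linN] lin_0[OF linN])
    also have "\<dots> = 0" by (intro sum.neutral) (auto simp: N_odd)
    finally show ?thesis using N_last \<open>j = K - 1\<close> by simp
  qed
  \<comment> \<open>kill on the basis\<close>
  have fU: "finite (UNIV :: 'a set)" by simp
  have D_even: "D (v j) = a j *s v j" if "j + 1 < K" "even (K - 1 - j)" for j
    using that by (simp add: Dv G_def)
  have D_odd: "D (v j) = A *v v j" if "j + 1 < K" "odd (K - 1 - j)" for j
    using that by (simp add: Dv G_def)
  have D_last: "D (v (K - 1)) = \<gamma> *s v (K - 1) + sp"
    using K1 by (simp add: Dv G_def)
  have linK: "lin (pe D q)" for q by (rule pe_lin[OF linD])
  have kill_sp: "pe D (kp S) sp = 0" if S: "finite S" "\<And>i. i + 1 < K \<Longrightarrow> even (K - 1 - i) \<Longrightarrow> a i \<in> S" for S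
  proof -
    have "pe D (kp S) sp = (\<Sum>i<K - 1. if even (K - 1 - i) then \<rho> i *s pe D (kp S) (v i) else 0)"
      unfolding sp_def lin_sum[OF linK] by (intro sum.cong) (auto simp: lin_scale[OF linK] lin_0[OF linK])
    also have "\<dots> = 0"
    proof (intro sum.neutral ballI)
      fix i assume i: "i \<in> {..<K - 1}"
      show "(if even (K - 1 - i) then \<rho> i *s pe D (kp S) (v i) else 0) = 0"
      proof (cases "even (K - 1 - i)")
        case True
        have "i + 1 < K" using i by auto
        then have "pe D (kp S) (v i) = 0"
          using kp_eigen[OF S(1) S(2)[OF _ True] linD D_even[OF _ True]] by blast
        then show ?thesis by simp
      qed simp
    qed
    finally show ?thesis .
  qed
  have killv: "pe D (kp UNIV) (v j) = 0" if j: "j < K" for j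
  proof (cases "j + 1 < K")
    case True
    show ?thesis
    proof (cases "even (K - 1 - j)")
      case True
      then show ?thesis using kp_eigen[OF fU _ linD D_even[OF \<open>j + 1 < K\<close> True]] by simp
    next
      case False
      then have oddj: "odd (K - 1 - j)" by simp
      have step: "pe D (kp UNIV) (v j) = pe D (kp (UNIV - {a j})) (v (Suc j))"
        using kp_remove[OF fU _ linD, of "a j" "v j"] D_odd[OF \<open>j + 1 < K\<close> oddj] Av[of j] by simp
      show ?thesis
      proof (cases "j + 2 < K")
        case True
        have "Suc (K - 1 - Suc j) = K - 1 - j" using True by simp
        then have ev: "even (K - 1 - Suc j)" using oddj by (metis even_Suc)
        have "Suc j + 1 < K" using True by simp
        then have "pe D (kp (UNIV - {a j})) (v (Suc j)) = 0"
          using kp_eigen[of "UNIV - {a j}" "a (Suc j)" D "v (Suc j)"] G1[OF True oddj] D_even[OF _ ev] linD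
          by auto
        then show ?thesis using step by simp
      next
        case False
        then have jK: "j = K - 2" "Suc j = K - 1" "2 \<le> K" using \<open>j + 1 < K\<close> by auto
        have \<gamma>in: "\<gamma> \<in> UNIV - {a j}" using G3[OF jK(3)] jK(1) by (auto simp: \<gamma>_def)
        have "pe D (kp (UNIV - {a j})) (v (Suc j)) = pe D (kp (UNIV - {a j})) (v (K - 1))"
          using jK(2) by simp
        also have "\<dots> = pe D (kp (UNIV - {a j} - {\<gamma>})) (D (v (K - 1)) - \<gamma> *s v (K - 1))"
          by (rule kp_remove[OF _ \<gamma>in linD]) simp
        also have "\<dots> = pe D (kp (UNIV - {a j} - {\<gamma>})) sp" using D_last by simp
        also have "\<dots> = 0"
          by (rule kill_sp) (use G2 jK in \<open>auto simp: \<gamma>_def\<close>)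
        finally show ?thesis using step by simp
      qed
    qed
  next
    case False
    then have jK: "j = K - 1" using j by simp
    have "pe D (kp UNIV) (v j) = pe D (kp (UNIV - {\<gamma>})) sp"
      using kp_remove[OF fU _ linD, of \<gamma> "v (K - 1)"] D_last jK by simp
    also have "\<dots> = 0"
      by (rule kill_sp) (use G2 in \<open>auto simp: \<gamma>_def\<close>)
    finally show ?thesis .
  qed
  \<comment> \<open>assemble\<close>
  have GB: "D b \<in> vec.span B" if "b \<in> B" for b
  proof -
    obtain j where j: "j < K" "b = v j" using \<open>b \<in> B\<close> by (auto simp: B_def)
    have spB: "sp \<in> vec.span B"
      unfolding sp_def
    proof (rule vec.span_sum)
      fix i assume "i \<in> {..<K - 1}"
      then show "(if even (K - 1 - i) then \<rho> i *s v i else 0) \<in> vec.span B"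
        using vB[of i] by (auto intro: vec.span_scale vec.span_zero)
    qed
    show ?thesis
    proof (cases "j + 1 < K")
      case True
      then show ?thesis
        using j vB[of j] vB[of "Suc j"] Av[of j]
        by (cases "even (K - 1 - j)")
          (auto simp: D_even D_odd intro: vec.span_scale vec.span_add)
    next
      case False
      then have "j = K - 1" using j by simp
      then show ?thesis using j D_last vB[of "K - 1"] spB K1
        by (auto intro: vec.span_scale vec.span_add)
    qed
  qed
  have "good_on A (vec.span B) D"
    unfolding good_on_def
  proof (intro conjI ballI)
    show "lin D" by (rule linD)
    fix x assume x: "x \<in> vec.span B"
    show "D x \<in> vec.span B" by (rule lin_span_image[OF linD _ x]) (use GB in blast)
    show "pe D (kp UNIV) x = 0"
      by (rule lin_zero_on_span[OF linK _ x]) (use killv in \<open>auto simp: B_def\<close>)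
    show "Nm A D (Nm A D x) = 0"
      by (rule lin_zero_on_span[OF lin_comp[OF linN linN] _ x]) (use NNv in \<open>auto simp: B_def\<close>)
  qed
  then show ?thesis using span_eq by auto
qed



lemma char2_add_self:
  assumes "CHAR('a::field) = 2"
  shows "(x::'a) + x = 0"
proof -
  have "of_nat CHAR('a) = (0::'a)" by (rule of_nat_CHAR)
  then have "of_nat 2 = (0::'a)" unfolding assms .
  then have two: "(1 + 1 :: 'a) = 0" by (metis of_nat_1 of_nat_add one_add_one)
  have "x + x = (1 + 1) * x" by (simp add: distrib_right)
  also have "\<dots> = 0" unfolding two by simp
  finally show ?thesis .
qed

lemma char2_minus:
  assumes "CHAR('a::field) = 2"
  shows "- (x::'a) = x"
  using char2_add_self[OF assms, of x] by (metis add.right_neutral add_minus_cancel)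

lemma sqrt_exists:
  assumes "CHAR('a::{field,finite}) = 2"
  shows "\<exists>l::'a. l * l = c"
proof -
  have "inj (\<lambda>x::'a. x * x)"
  proof (rule injI)
    fix x y :: 'a assume "x * x = y * y"
    then have "(x + y) * (x + y) = x * x + y * y + (x * y + x * y)"
      by (simp add: algebra_simps)
    also have "x * y + x * y = 0" by (rule char2_add_self[OF assms])
    also have "x * x + y * y = 0" using \<open>x * x = y * y\<close> char2_add_self[OF assms, of "y * y"] by simp
    finally have "x + y = 0" by simp
    then have "- x = y" by (rule minus_unique)
    then show "x = y" using char2_minus[OF assms, of x] by simp
  qed
  then have "surj (\<lambda>x::'a. x * x)" using finite_UNIV_inj_surj[of "\<lambda>x::'a. x * x"] by simp
  then show ?thesis by (metis surjD)
qed

lemma Zs_scale: "x \<in> Zs A w K \<Longrightarrow> r *s x \<in> Zs A w K"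
proof -
  assume "x \<in> Zs A w K"
  then obtain d where d: "x = (\<Sum>j<K. d j *s Ap A j w)" by (auto simp: Zs_def)
  then have "r *s x = (\<Sum>j<K. (r * d j) *s Ap A j w)"
    by (simp add: vec.scale_sum_right vector_smult_assoc)
  then show "r *s x \<in> Zs A w K" unfolding Zs_def mem_Collect_eq by (intro exI[of _ "\<lambda>j. r * d j"]) simp
qed

lemma block_special:
  fixes A :: "'a::{field,finite}^'n^'n"
  assumes ch: "CHAR('a) = 2"
    and cAK: "Ap A 2 w = (\<Sum>j<2. c j *s Ap A j w)" and c1: "c 1 = 0"
  shows "\<exists>D. good_on A (Zs A w 2) D"
proof -
  obtain l :: 'a where l: "l * l = c 0" using sqrt_exists[OF ch] by blast
  define D where "D x = l *s x" for x :: "'a^'n"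
  have linD: "lin D" by (simp add: lin_def D_def vector_add_ldistrib vector_smult_assoc mult.commute)
  have A2w: "A *v (A *v w) = c 0 *s w"
    using cAK c1 by (simp add: numeral_2_eq_2 Ap_Suc)
  have A2: "A *v (A *v x) = c 0 *s x" if xZ: "x \<in> Zs A w 2" for x
  proof -
    obtain d where d: "x = (\<Sum>j<2. d j *s Ap A j w)" using xZ unfolding Zs_def by blast
    then have x: "x = d 0 *s w + d 1 *s (A *v w)" by (simp add: numeral_2_eq_2 Ap_Suc)
    have "A *v (A *v (A *v w)) = c 0 *s (A *v w)"
      using A2w lin_scale[OF lin_mat, of A "c 0" w] by simp
    then show ?thesis
      unfolding x using A2w
      by (simp add: lin_add[OF lin_mat] lin_scale[OF lin_mat] vector_smult_assoc mult.commute
          vector_add_ldistrib)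
  qed
  have "good_on A (Zs A w 2) D"
    unfolding good_on_def
  proof (intro conjI ballI)
    show "lin D" by (rule linD)
    fix x assume x: "x \<in> Zs A w 2"
    show "D x \<in> Zs A w 2" unfolding D_def by (rule Zs_scale[OF x])
    show "pe D (kp UNIV) x = 0" by (rule kp_eigen[OF _ _ linD]) (auto simp: D_def)
    have "Nm A D (Nm A D x) = (A *v (A *v x) - l *s (A *v x)) - (l *s (A *v x) - (l * l) *s x)"
      by (simp add: Nm_def D_def lin_diff[OF lin_mat] lin_scale[OF lin_mat] vector_ssub_ldistrib
          vector_smult_assoc)
    also have "\<dots> = (c 0 *s x - l *s (A *v x)) - (l *s (A *v x) - c 0 *s x)"
      using A2[OF x] l by simp
    also have "\<dots> = (c 0 + c 0) *s x - (l + l) *s (A *v x)"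
      by (simp add: vec_eq_iff ring_distribs)
    also have "\<dots> = 0" unfolding char2_add_self[OF ch, of l] char2_add_self[OF ch, of "c 0"] by simp
    finally show "Nm A D (Nm A D x) = 0" .
  qed
  then show ?thesis by blast
qed



lemma avoid3:
  assumes "CARD('a::finite) \<ge> 4"
  shows "\<exists>x::'a. x \<noteq> p \<and> x \<noteq> q \<and> x \<noteq> r"
proof -
  have "card {p, q, r} \<le> 3"
    by (auto simp: card_insert_if)
  then have "{p, q, r} \<noteq> (UNIV :: 'a set)" using assms by auto
  then show ?thesis by auto
qed

lemma block:
  fixes A :: "'a::{field,finite}^'n^'n"
  assumes ch: "CHAR('a) = 2" and card: "CARD('a) \<ge> 4"
    and K1: "1 \<le> K" and ind: "krylov_indep A w K"
    and cAK: "Ap A K w = (\<Sum>j<K. c j *s Ap A j w)"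
  shows "\<exists>D. good_on A (Zs A w K) D"
proof -
  consider "K = 1" | "K = 2" "c 1 = 0" | "K = 2" "c 1 \<noteq> 0" | "K \<ge> 3" using K1 by linarith
  then show ?thesis
  proof cases
    case 1
    show ?thesis by (rule block_generic[OF K1 ind cAK, of "\<lambda>_. 0"]) (use 1 in auto)
  next
    case 2
    then show ?thesis using block_special[OF ch, of A w c] cAK by simp
  next
    case 3
    show ?thesis
    proof (rule block_generic[OF K1 ind cAK, of "\<lambda>_. 0"])
      fix j assume "j + 1 < K" "even (K - 1 - j)"
      then show "(0::'a) \<noteq> c (K - 1) - (\<Sum>l<K - 1. 0) \<and> (0::'a) \<noteq> 0" using 3 by auto
    qed (use 3 in auto)
  next
    case 4
    define a0 where "a0 l = (if even (K - 1 - l) then 0 else (1::'a))" for l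
    define S0 where "S0 = {..<K - 1} - {0} - {K - 2}"
    define K0 where "K0 = c (K - 1) - sum a0 S0"
    obtain \<delta> where \<delta>: "\<delta> \<noteq> 0" "\<delta> \<noteq> K0" using avoid3[OF card, of 0 K0 0] by blast
    obtain \<epsilon> where \<epsilon>: "\<epsilon> \<noteq> K0 - \<delta> - \<delta>" "\<epsilon> \<noteq> K0 - \<delta>" "\<epsilon> \<noteq> (if even K then 0 else \<delta>)"
      using avoid3[OF card, of "K0 - \<delta> - \<delta>" "K0 - \<delta>" "if even K then 0 else \<delta>"] by blast
    define a where "a l = (if l = 0 then \<epsilon> else if l = K - 2 then \<delta> else a0 l)" for l
    have sum_a: "(\<Sum>l<K - 1. a l) = \<epsilon> + \<delta> + sum a0 S0"
    proof -
      have f: "finite {..<K - 1}" by simp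
      have i0: "0 \<in> {..<K - 1}" using 4 by simp
      have i2: "K - 2 \<in> {..<K - 1} - {0}" using 4 by auto
      have e1: "(\<Sum>l<K - 1. a l) = a 0 + sum a ({..<K - 1} - {0})" by (rule sum.remove[OF f i0])
      have e2: "sum a ({..<K - 1} - {0}) = a (K - 2) + sum a S0"
        unfolding S0_def by (rule sum.remove) (use i2 in auto)
      have e3: "sum a S0 = sum a0 S0" by (intro sum.cong) (auto simp: S0_def a_def)
      have e4: "a 0 = \<epsilon>" "a (K - 2) = \<delta>" using 4 by (auto simp: a_def)
      show ?thesis unfolding e1 e2 e3 e4 by (simp add: ac_simps)
    qed
    define \<gamma> where "\<gamma> = K0 - \<epsilon> - \<delta>"
    have \<gamma>: "c (K - 1) - (\<Sum>l<K - 1. a l) = \<gamma>"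
      unfolding sum_a \<gamma>_def K0_def by (simp add: algebra_simps)
    have aK2: "a (K - 2) = \<delta>" using 4 by (simp add: a_def)
    show ?thesis
    proof (rule block_generic[OF K1 ind cAK, of a], unfold \<gamma> aK2)
      fix j assume j: "j + 2 < K" "odd (K - 1 - j)"
      have "Suc (K - 1 - Suc j) = K - 1 - j" using j by simp
      then have ev: "even (K - 1 - Suc j)" using j(2) by (metis even_Suc)
      have "Suc j \<noteq> K - 2"
      proof
        assume "Suc j = K - 2"
        then have "K - 1 - j = 2" using j by simp
        then show False using j(2) by simp
      qed
      then have aS: "a (Suc j) = 0" using ev by (simp add: a_def a0_def)
      show "a j \<noteq> a (Suc j)"
      proof (cases "j = 0")
        case True
        then have "even K" using j 4 by (metis One_nat_def diff_zero even_Suc Suc_pred' 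
              not_gr_zero not_numeral_le_zero)
        then show ?thesis using True \<epsilon>(3) aS by (simp add: a_def)
      next
        case False
        then show ?thesis using j aS by (simp add: a_def a0_def)
      qed
    next
      fix j assume j: "j + 1 < K" "even (K - 1 - j)"
      have jK2: "j \<noteq> K - 2"
      proof
        assume "j = K - 2"
        then have "K - 1 - j = 1" using 4 by simp
        then show False using j(2) by simp
      qed
      show "a j \<noteq> \<gamma> \<and> a j \<noteq> \<delta>"
      proof (cases "j = 0")
        case True
        then have "odd K" using j 4 by (metis One_nat_def diff_zero even_Suc Suc_pred' 
              not_gr_zero not_numeral_le_zero)
        then have e\<delta>: "\<epsilon> \<noteq> \<delta>" using \<epsilon>(3) by simp
        have "\<epsilon> \<noteq> \<gamma>"
        proof
          assume "\<epsilon> = \<gamma>"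
          then have "\<epsilon> + \<epsilon> = K0 - \<delta>" by (simp add: \<gamma>_def algebra_simps)
          then have "K0 = \<delta>" using char2_add_self[OF ch, of \<epsilon>] by simp
          then show False using \<delta>(2) by simp
        qed
        then show ?thesis using True e\<delta> by (simp add: a_def)
      next
        case False
        then have "a j = 0" using jK2 j(2) by (simp add: a_def a0_def)
        moreover have "(0::'a) \<noteq> \<gamma>"
        proof
          assume "0 = \<gamma>"
          then have "\<epsilon> = K0 - \<delta>" by (simp add: \<gamma>_def algebra_simps)
          then show False using \<epsilon>(2) by simp
        qed
        ultimately show ?thesis using \<delta>(1) by simp
      qed
    next
      show "\<delta> \<noteq> \<gamma>"
      proof
        assume "\<delta> = \<gamma>"
        then have "\<epsilon> = K0 - \<delta> - \<delta>" by (simp add: \<gamma>_def algebra_simps)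
        then show False using \<epsilon>(1) by simp
      qed
    qed
  qed
qed



lemma Zs_subspace: "vec.subspace (Zs A w K)"
  unfolding vec.subspace_def Zs_def
proof (intro conjI ballI allI)
  show "0 \<in> {\<Sum>j<K. c j *s Ap A j w |c. True}"
    unfolding mem_Collect_eq by (intro exI[of _ "\<lambda>_. 0"]) simp
  fix x y assume "x \<in> {\<Sum>j<K. c j *s Ap A j w |c. True}" "y \<in> {\<Sum>j<K. c j *s Ap A j w |c. True}"
  then obtain c1 c2 where "x = (\<Sum>j<K. c1 j *s Ap A j w)" "y = (\<Sum>j<K. c2 j *s Ap A j w)" by auto
  then have "x + y = (\<Sum>j<K. (c1 j + c2 j) *s Ap A j w)"
    by (simp add: sum.distrib vector_sadd_rdistrib)
  then show "x + y \<in> {\<Sum>j<K. c j *s Ap A j w |c. True}"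
    unfolding mem_Collect_eq by (intro exI[of _ "\<lambda>j. c1 j + c2 j"]) simp
next
  fix r x assume "x \<in> {\<Sum>j<K. c j *s Ap A j w |c. True}"
  then obtain c1 where "x = (\<Sum>j<K. c1 j *s Ap A j w)" by auto
  then have "r *s x = (\<Sum>j<K. (r * c1 j) *s Ap A j w)"
    by (simp add: vec.scale_sum_right vector_smult_assoc)
  then show "r *s x \<in> {\<Sum>j<K. c j *s Ap A j w |c. True}"
    unfolding mem_Collect_eq by (intro exI[of _ "\<lambda>j. r * c1 j"]) simp
qed

lemma Ap_in_Zs:
  assumes cAK: "Ap A K w = (\<Sum>j<K. c j *s Ap A j w)" and i: "i \<le> K"
  shows "Ap A i w \<in> Zs A w K"
proof (cases "i = K")
  case True
  then show ?thesis using cAK unfolding Zs_def mem_Collect_eq by (intro exI[of _ c]) simp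
next
  case False
  then have "i < K" using i by simp
  have "Ap A i w = (\<Sum>j<K. (if j = i then 1 else 0) *s Ap A j w)"
  proof -
    have "(\<Sum>j<K. (if j = i then 1 else 0) *s Ap A j w) = (\<Sum>j<K. if j = i then Ap A j w else 0)"
      by (intro sum.cong) auto
    then show ?thesis using \<open>i < K\<close> by (simp add: sum.delta)
  qed
  then show ?thesis unfolding Zs_def mem_Collect_eq by (intro exI[of _ "\<lambda>j. if j = i then 1 else 0"]) simp
qed

lemma Zs_inv:
  assumes cAK: "Ap A K w = (\<Sum>j<K. c j *s Ap A j w)"
  shows "inv_sub A (Zs A w K)"
  unfolding inv_sub_def
proof (intro conjI ballI)
  show "vec.subspace (Zs A w K)" by (rule Zs_subspace)
  fix x assume "x \<in> Zs A w K"
  then obtain d where d: "x = (\<Sum>j<K. d j *s Ap A j w)" unfolding Zs_def by blast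
  have "A *v x = (\<Sum>j<K. d j *s Ap A (Suc j) w)"
    unfolding d by (simp add: lin_sum[OF lin_mat] lin_scale[OF lin_mat] Ap_Suc)
  also have "\<dots> \<in> Zs A w K"
    using Zs_subspace Ap_in_Zs[OF cAK]
    by (intro vec.subspace_sum vec.subspace_scale) auto
  finally show "A *v x \<in> Zs A w K" .
qed

lemma Zs_sub_W:
  assumes "inv_sub A W" "w \<in> W"
  shows "Zs A w K \<subseteq> W"
proof
  fix x assume "x \<in> Zs A w K"
  then obtain d where d: "x = (\<Sum>j<K. d j *s Ap A j w)" unfolding Zs_def by blast
  show "x \<in> W" unfolding d using assms Ap_in[OF assms]
    by (intro vec.subspace_sum vec.subspace_scale) (auto simp: inv_sub_def)
qed

lemma funpow_local:
  assumes "\<forall>x\<in>Z. D x = D0 x" "\<forall>x\<in>Z. D0 x \<in> Z" "z \<in> Z"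
  shows "(D ^^ i) z = (D0 ^^ i) z \<and> (D0 ^^ i) z \<in> Z"
  by (induction i) (use assms in auto)

lemma pe_local:
  assumes "\<forall>x\<in>Z. D x = D0 x" "\<forall>x\<in>Z. D0 x \<in> Z" "z \<in> Z"
  shows "pe D q z = pe D0 q z"
  unfolding pe_def using funpow_local[OF assms] by simp

lemma glue_maps:
  assumes Z: "vec.subspace Z" and W: "vec.subspace W'" and int: "\<forall>x\<in>Z. x \<in> W' \<longrightarrow> x = 0"
    and l0: "lin D0" and l1: "lin D1"
  shows "\<exists>D. lin D \<and> (\<forall>x\<in>Z. D x = D0 x) \<and> (\<forall>x\<in>W'. D x = D1 x)"
proof -
  obtain B0 where B0: "B0 \<subseteq> Z" "vec.independent B0" "Z \<subseteq> vec.span B0" "card B0 = vec.dim Z"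
    by (rule vec.basis_exists)
  obtain B1 where B1: "B1 \<subseteq> W'" "vec.independent B1" "W' \<subseteq> vec.span B1" "card B1 = vec.dim W'"
    by (rule vec.basis_exists)
  have fin0: "finite B0" by (rule vec.finiteI_independent[OF B0(2)])
  have fin1: "finite B1" by (rule vec.finiteI_independent[OF B1(2)])
  have disj: "B0 \<inter> B1 = {}"
  proof (rule ccontr)
    assume "B0 \<inter> B1 \<noteq> {}"
    then obtain b where "b \<in> B0" "b \<in> B1" by blast
    then have "b = 0" using int B0(1) B1(1) by blast
    then show False using \<open>b \<in> B0\<close> B0(2) vec.dependent_zero[of B0] by simp
  qed
  have ind: "vec.independent (B0 \<union> B1)"
  proof (rule vec.independent_if_scalars_zero)
    show "finite (B0 \<union> B1)" using fin0 fin1 by simp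
    fix f x assume s: "(\<Sum>x\<in>B0 \<union> B1. f x *s x) = 0" and x: "x \<in> B0 \<union> B1"
    define z where "z = (\<Sum>x\<in>B0. f x *s x)"
    define y where "y = (\<Sum>x\<in>B1. f x *s x)"
    have zy: "z + y = 0" using s disj fin0 fin1 by (simp add: z_def y_def sum.union_disjoint)
    have zZ: "z \<in> Z" unfolding z_def using Z B0(1) by (intro vec.subspace_sum vec.subspace_scale) auto
    have yW: "y \<in> W'" unfolding y_def using W B1(1) by (intro vec.subspace_sum vec.subspace_scale) auto
    have "z = - y" using zy by (simp add: eq_neg_iff_add_eq_0)
    then have "z \<in> W'" using vec.subspace_neg[OF W yW] by simp
    then have z0: "z = 0" using int zZ by blast
    then have y0: "y = 0" using zy by simp
    show "f x = 0"
    proof (cases "x \<in> B0")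
      case True
      then show ?thesis using z0 B0(2) unfolding z_def vec.independent_explicit by auto
    next
      case False
      then have "x \<in> B1" using x by simp
      then show ?thesis using y0 B1(2) unfolding y_def vec.independent_explicit by auto
    qed
  qed
  define D where "D = vec.construct (B0 \<union> B1) (\<lambda>b. if b \<in> B0 then D0 b else D1 b)"
  have linD: "Vector_Spaces.linear (*s) (*s) D" unfolding D_def by (rule vec.linear_construct[OF ind])
  have DB: "D b = (if b \<in> B0 then D0 b else D1 b)" if "b \<in> B0 \<union> B1" for b
    unfolding D_def by (rule vec.construct_basis[OF ind that])
  have "D x = D0 x" if "x \<in> Z" for x
    by (rule vec.linear_eq_on[OF linD iffD1[OF lin_iff_linear l0]]) (use that B0 DB in auto)
  moreover have "D x = D1 x" if "x \<in> W'" for x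
    by (rule vec.linear_eq_on[OF linD iffD1[OF lin_iff_linear l1]]) (use that B1 DB disj in auto)
  ultimately show ?thesis using linD lin_iff_linear by blast
qed

lemma main_claim:
  fixes A :: "'a::{field,finite}^'n^'n"
  assumes ch: "CHAR('a) = 2" and card: "CARD('a) \<ge> 4"
  shows "inv_sub A W \<Longrightarrow> \<exists>D. good_on A W D"
proof (induction "vec.dim W" arbitrary: W rule: less_induct)
  case less
  note W = less.prems
  have Wsub: "vec.subspace W" using W by (simp add: inv_sub_def)
  show ?case
  proof (cases "\<exists>z\<in>W. z \<noteq> 0")
    case False
    then have W0: "\<forall>x\<in>W. x = 0" by blast
    define D where "D x = (0::'a^'n)" for x :: "'a^'n"
    have "good_on A W D"
      unfolding good_on_def
    proof (intro conjI ballI)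
      show "lin D" by (simp add: lin_def D_def)
      fix x assume x: "x \<in> W"
      then have x0: "x = 0" using W0 by blast
      show "D x \<in> W" using Wsub by (simp add: D_def vec.subspace_0)
      have "lin D" by (simp add: lin_def D_def)
      then show "pe D (kp UNIV) x = 0" using x0 lin_0[OF pe_lin] by simp
      show "Nm A D (Nm A D x) = 0" using x0 by (simp add: Nm_def D_def)
    qed
    then show ?thesis by blast
  next
    case True
    obtain w K W' where wW: "w \<in> W" and K1: "1 \<le> K" and ind: "krylov_indep A w K"
      and sp: "\<exists>c. Ap A K w = (\<Sum>j<K. c j *s Ap A j w)"
      and W': "inv_sub A W'" and W'W: "W' \<subseteq> W" and wW': "w \<notin> W'"
      and int: "\<forall>c. (\<Sum>j<K. c j *s Ap A j w) \<in> W' \<longrightarrow> (\<Sum>j<K. c j *s Ap A j w) = 0"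
      and dec: "\<forall>x\<in>W. \<exists>c y. y \<in> W' \<and> x = (\<Sum>j<K. c j *s Ap A j w) + y"
      using split_lemma[OF W True] by blast
    obtain c where cAK: "Ap A K w = (\<Sum>j<K. c j *s Ap A j w)" using sp by blast
    have W'sub: "vec.subspace W'" using W' by (simp add: inv_sub_def)
    have sW: "vec.span W = W" by (rule vec.span_eq_iff[THEN iffD2, OF Wsub])
    have sW': "vec.span W' = W'" by (rule vec.span_eq_iff[THEN iffD2, OF W'sub])
    have "vec.span W' \<subset> vec.span W"
      unfolding sW sW' using W'W wW wW' by blast
    then have "vec.dim W' < vec.dim W" by (rule vec.dim_psubset)
    then obtain D1 where D1: "good_on A W' D1" using less.hyps W' by blast
    obtain D0 where D0: "good_on A (Zs A w K) D0" using block[OF ch card K1 ind cAK] by blast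
    let ?Z = "Zs A w K"
    have Zinv: "inv_sub A ?Z" by (rule Zs_inv[OF cAK])
    have ZW: "?Z \<subseteq> W" by (rule Zs_sub_W[OF W wW])
    have intZ: "\<forall>x\<in>?Z. x \<in> W' \<longrightarrow> x = 0"
    proof (intro ballI impI)
      fix x assume x: "x \<in> ?Z" "x \<in> W'"
      then obtain d where d: "x = (\<Sum>j<K. d j *s Ap A j w)" unfolding Zs_def by blast
      show "x = 0" using int[rule_format, of d] x(2) d by simp
    qed
    have l0: "lin D0" using D0 by (simp add: good_on_def)
    have l1: "lin D1" using D1 by (simp add: good_on_def)
    obtain D where linD: "lin D" and DZ: "\<forall>x\<in>?Z. D x = D0 x" and DW: "\<forall>x\<in>W'. D x = D1 x"
      using glue_maps[OF Zs_subspace W'sub intZ l0 l1] by blast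
    have D0Z: "\<forall>x\<in>?Z. D0 x \<in> ?Z" and D1W: "\<forall>x\<in>W'. D1 x \<in> W'"
      using D0 D1 by (auto simp: good_on_def)
    have decW: "\<exists>z y. z \<in> ?Z \<and> y \<in> W' \<and> x = z + y" if "x \<in> W" for x
      using dec that unfolding Zs_def by blast
    have linK: "lin (pe D q)" for q by (rule pe_lin[OF linD])
    have linNN: "lin (\<lambda>x. Nm A D (Nm A D x))" by (rule lin_comp[OF lin_Nm[OF linD] lin_Nm[OF linD]])
    have NZ: "Nm A D z = Nm A D0 z" "Nm A D0 z \<in> ?Z" if "z \<in> ?Z" for z
    proof -
      show "Nm A D z = Nm A D0 z" using DZ that by (simp add: Nm_def)
      show "Nm A D0 z \<in> ?Z" using that Zinv D0Z Zs_subspace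
        unfolding Nm_def inv_sub_def by (intro vec.subspace_diff) auto
    qed
    have NW: "Nm A D y = Nm A D1 y" "Nm A D1 y \<in> W'" if "y \<in> W'" for y
    proof -
      show "Nm A D y = Nm A D1 y" using DW that by (simp add: Nm_def)
      show "Nm A D1 y \<in> W'" using that W' D1W W'sub
        unfolding Nm_def inv_sub_def by (intro vec.subspace_diff) auto
    qed
    have "good_on A W D"
      unfolding good_on_def
    proof (intro conjI ballI)
      show "lin D" by (rule linD)
      fix x assume x: "x \<in> W"
      obtain z y where zy: "z \<in> ?Z" "y \<in> W'" "x = z + y" using decW[OF x] by blast
      have Dx: "D x = D0 z + D1 y" using zy DZ DW lin_add[OF linD] by simp
      show "D x \<in> W" unfolding Dx using D0Z D1W zy ZW W'W Wsub
        by (intro vec.subspace_add) auto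
      have "pe D (kp UNIV) x = pe D (kp UNIV) z + pe D (kp UNIV) y"
        using zy lin_add[OF linK] by simp
      also have "\<dots> = pe D0 (kp UNIV) z + pe D1 (kp UNIV) y"
        using pe_local[OF DZ D0Z zy(1)] pe_local[OF DW D1W zy(2)] by simp
      also have "\<dots> = 0" using D0 D1 zy by (simp add: good_on_def)
      finally show "pe D (kp UNIV) x = 0" .
      have "Nm A D (Nm A D x) = Nm A D (Nm A D z) + Nm A D (Nm A D y)"
        using zy lin_add[OF linNN] by simp
      also have "\<dots> = Nm A D0 (Nm A D0 z) + Nm A D1 (Nm A D1 y)"
        using NZ[OF zy(1)] NZ[OF NZ(2)[OF zy(1)]] NW[OF zy(2)] NW[OF NW(2)[OF zy(2)]] by simp
      also have "\<dots> = 0" using D0 D1 zy by (simp add: good_on_def)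
      finally show "Nm A D (Nm A D x) = 0" .
    qed
    then show ?thesis by blast
  qed
qed



lemma kp_insert:
  assumes "finite S" "\<mu> \<notin> S"
  shows "kp (insert \<mu> S) = [:- \<mu>, 1:] * kp S"
  using assms by (simp add: kp_def)

lemma eigen_span:
  fixes f :: "'a::field^'n \<Rightarrow> 'a^'n"
  assumes lf: "lin f" and fin: "finite S"
  shows "pe f (kp S) x = 0 \<Longrightarrow> x \<in> vec.span {v. \<exists>t. f v = t *s v}"
  using fin
proof (induction S arbitrary: x rule: finite_induct)
  case empty
  then have "x = 0" by (simp add: kp_def pe_1)
  then show ?case by (simp add: vec.span_zero)
next
  case (insert \<mu> S)
  let ?E = "{v. \<exists>t. f v = t *s v}"
  define Q where "Q = kp S"
  define c where "c = poly Q \<mu>"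
  have c0: "c \<noteq> 0"
    unfolding c_def Q_def kp_def poly_prod using insert(1,2) by auto
  define y where "y = pe f Q x"
  have "f y - \<mu> *s y = pe f ([:- \<mu>, 1:] * Q) x"
    unfolding y_def pe_mult[OF lf] by (rule pe_lin_factor[OF lf, symmetric])
  also have "\<dots> = 0" using insert(4) kp_insert[OF insert(1,2)] by (simp add: Q_def)
  finally have "y \<in> ?E" by auto
  define r where "r = 1 - smult (1 / c) Q"
  have "poly r \<mu> = 0" using c0 by (simp add: r_def c_def)
  then have "[:- \<mu>, 1:] dvd r" using dvd_iff_poly_eq_0[of "- \<mu>" r] by simp
  then obtain R where R: "r = [:- \<mu>, 1:] * R" by (elim dvdE)
  define x' where "x' = pe f r x"
  have "pe f (kp S) x' = pe f (R * kp (insert \<mu> S)) x"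
  proof -
    have eq: "kp S * ([:- \<mu>, 1:] * R) = R * ([:- \<mu>, 1:] * kp S)" by (simp only: ac_simps)
    show ?thesis unfolding x'_def pe_mult[OF lf, symmetric] R kp_insert[OF insert(1,2)] eq ..
  qed
  also have "\<dots> = pe f R (pe f (kp (insert \<mu> S)) x)" by (rule pe_mult[OF lf])
  also have "\<dots> = 0" unfolding insert(4) by (rule lin_0[OF pe_lin[OF lf]])
  finally have x'E: "x' \<in> vec.span ?E" by (rule insert.IH)
  have xeq: "x = x' + (1 / c) *s y"
    by (simp add: x'_def r_def y_def pe_diff pe_smult pe_1)
  have yE: "(1 / c) *s y \<in> vec.span ?E" using \<open>y \<in> ?E\<close> by (intro vec.span_scale vec.span_base)
  have "x' + (1 / c) *s y \<in> vec.span ?E" by (rule vec.span_add[OF x'E yE])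
  then show ?case using xeq by simp
qed

lemma diag_from_kill:
  fixes Dm :: "'a::{field,finite}^'n^'n"
  assumes kill: "\<And>x. pe ((*v) Dm) (kp UNIV) x = 0"
  shows "diagonalizable Dm"
proof -
  let ?E = "{v. \<exists>t. Dm *v v = t *s v}"
  have spanE: "vec.span ?E = UNIV"
    using eigen_span[OF lin_mat[of Dm] finite_class.finite_UNIV] kill by auto
  obtain B where B: "B \<subseteq> ?E" "vec.independent B" "?E \<subseteq> vec.span B"
    by (rule vec.maximal_independent_subset)
  have "vec.span ?E \<subseteq> vec.span (vec.span B)" by (rule vec.span_mono[OF B(3)])
  then have "vec.span ?E \<subseteq> vec.span B" by (simp add: vec.span_span)
  then have spanB: "vec.span B = UNIV" using spanE by auto
  have finB: "finite B" by (rule vec.finiteI_independent[OF B(2)])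
  have cardB: "card B = CARD('n)"
  proof -
    have "card B = vec.dim (UNIV :: ('a^'n) set)"
      using vec.basis_card_eq_dim[of B UNIV] B(2) spanB by simp
    also have "\<dots> = CARD('n)" by (simp add: vec.dim_UNIV card_cart_basis)
    finally show ?thesis .
  qed
  obtain e where e: "bij_betw e (UNIV :: 'n set) B"
    using finite_same_card_bij[of "UNIV :: 'n set" B] finB cardB by auto
  have eB: "e j \<in> B" for j using e by (auto simp: bij_betw_def)
  have "\<exists>lam. \<forall>j. Dm *v e j = lam j *s e j"
  proof (rule choice, rule allI)
    fix j
    have "e j \<in> ?E" using eB[of j] B(1) by blast
    then show "\<exists>t. Dm *v e j = t *s e j" by simp
  qed
  then obtain lam where lam: "\<And>j. Dm *v e j = lam j *s e j" by blast
  define U :: "'a^'n^'n" where "U = (\<chi> i j. e j $ i)"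
  have colU: "U *v axis j 1 = e j" for j
    by (simp add: U_def vec_eq_iff matrix_vector_mult_def axis_def if_distrib cong: if_cong)
  have Ux: "U *v x = (\<Sum>j\<in>UNIV. x $ j *s e j)" for x
    by (simp add: matrix_mult_sum column_def U_def)
  have invU: "invertible U"
    unfolding invertible_left_inverse matrix_left_invertible_ker
  proof (intro allI impI)
    fix x assume "U *v x = 0"
    then have s: "(\<Sum>j\<in>UNIV. x $ j *s e j) = 0" using Ux by simp
    have "(\<Sum>v\<in>B. x $ (inv_into UNIV e v) *s v) = (\<Sum>j\<in>UNIV. x $ j *s e j)"
    proof -
      have "B = e ` UNIV" using e by (simp add: bij_betw_def)
      moreover have "inj e" using e by (simp add: bij_betw_def)
      ultimately show ?thesis by (simp add: sum.reindex)
    qed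
    then have "(\<Sum>v\<in>B. x $ (inv_into UNIV e v) *s v) = 0" using s by simp
    moreover have h: "\<forall>c. (\<Sum>v\<in>B. c v *s v) = 0 \<longrightarrow> (\<forall>v\<in>B. c v = 0)"
      using B(2) unfolding vec.independent_explicit by blast
    ultimately have "\<forall>v\<in>B. x $ (inv_into UNIV e v) = 0"
      using spec[OF h, of "\<lambda>v. x $ (inv_into UNIV e v)"] by simp
    moreover have "inv_into UNIV e (e j) = j" for j
      using e by (simp add: bij_betw_def inv_into_f_f)
    ultimately have "x $ j = 0" for j using eB[of j] by metis
    then show "x = 0" by (simp add: vec_eq_iff)
  qed
  obtain Ui where Ui: "Ui ** U = mat 1" "U ** Ui = mat 1" using invU by (auto simp: invertible_def)
  have inv_eq: "matrix_inv U ** U = mat 1"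
  proof -
    have "\<exists>A'. U ** A' = mat 1 \<and> A' ** U = mat 1" using Ui by blast
    then have "U ** matrix_inv U = mat 1 \<and> matrix_inv U ** U = mat 1"
      unfolding matrix_inv_def by (rule someI_ex)
    then show ?thesis by simp
  qed
  have "is_diagonal_matrix (matrix_inv U ** Dm ** U)"
    unfolding is_diagonal_matrix_def
  proof (intro allI impI)
    fix i j :: 'n assume ij: "i \<noteq> j"
    have "(matrix_inv U ** Dm ** U) *v axis j 1 = matrix_inv U *v (Dm *v (U *v axis j 1))"
      by (simp add: matrix_vector_mul_assoc matrix_mul_assoc)
    also have "\<dots> = lam j *s (matrix_inv U *v (U *v axis j 1))"
      by (simp add: colU lam lin_scale[OF lin_mat])
    also have "\<dots> = lam j *s axis j 1"
      by (simp add: matrix_vector_mul_assoc inv_eq)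
    finally have col: "(matrix_inv U ** Dm ** U) *v axis j 1 = lam j *s axis j 1" .
    have "(matrix_inv U ** Dm ** U) $ i $ j = ((matrix_inv U ** Dm ** U) *v axis j 1) $ i"
      by (simp add: matrix_vector_mult_def axis_def if_distrib cong: if_cong)
    also have "\<dots> = 0" using col ij by (simp add: axis_def)
    finally show "(matrix_inv U ** Dm ** U) $ i $ j = 0" .
  qed
  then show ?thesis unfolding diagonalizable_def using invU by blast
qed

theorem theorem3p1:
  fixes A :: "'a::{field,finite} ^'n::finite^'n"
  assumes "CHAR('a) = 2"
    and "CARD('a) \<ge> 4"
  shows "\<exists>N D :: 'a^'n^'n. A = N + D \<and> N ** N = 0 \<and> diagonalizable D"
proof -
  have "inv_sub A UNIV" by (simp add: inv_sub_def)
  then obtain D where D: "good_on A UNIV D" using main_claim[OF assms] by blast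
  have linD: "Vector_Spaces.linear (*s) (*s) D" using D lin_iff_linear by (auto simp: good_on_def)
  define Dm where "Dm = matrix D"
  have Dm: "Dm *v x = D x" for x unfolding Dm_def by (rule matrix_works[OF linD])
  have DmD: "(*v) Dm = D" using Dm by auto
  define N where "N = A - Dm"
  have "N ** N = 0"
  proof -
    have "(N ** N) *v x = 0 *v x" for x
    proof -
      have "(N ** N) *v x = N *v (N *v x)" by (simp add: matrix_vector_mul_assoc)
      also have "N *v y = Nm A D y" for y by (simp add: N_def Nm_def Dm matrix_vector_mult_diff_rdistrib)
      then have "N *v (N *v x) = Nm A D (Nm A D x)" by simp
      also have "\<dots> = 0" using D by (simp add: good_on_def)
      finally show ?thesis by simp
    qed
    then show ?thesis by (simp add: matrix_eq)
  qed
  moreover have "diagonalizable Dm"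
    by (rule diag_from_kill) (use D in \<open>simp add: DmD good_on_def\<close>)
  moreover have "A = N + Dm" by (simp add: N_def)
  ultimately show ?thesis by blast
qed


end
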